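(* Let $F,G\in R$ have $Y$-degrees $N>0$ and $M>0$ respectively. Assume that $J(F,G)\in k((X))$, that $M\,O_0(F)=N\,O_0(G)$ (i.e. $\mathrm{UNP}(F)\|_0\mathrm{UNP}(G)$), and that either $\mathrm{int}(F,Y)<0$ or $\mathrm{int}(G,Y)<0$. Then $\mathrm{UNP}(F)\,|.|\,\mathrm{UNP}(G)$, and for every $i$ with $1\le i<\min(\iota(F),\iota(G))$ the polynomials $P_i^{(F)}$ and $P_i^{(G)}$ are related. Moreover, if $\widehat O(F)=\widehat O(G)$ then $\mathrm{UNP}(F)\|\mathrm{UNP}(G)$, and hence in particular $M\,\mathrm{int}(F,Y)=N\,\mathrm{int}(G,Y)$ and $M\widehat L(F)=N\widehat L(G)$.
   Context: Let $k$ be an algebraically closed field of characteristic zero, $R=k((X))[Y]$, $J(F,G)=F_XG_Y-F_YG_X$ (partial derivatives). For $F,G\in R$ of $Y$-degrees $N,M>0$ with leading $Y$-coefficients $F_0,G_0$, choose an integer $\nu>0$ such that $F(X^\nu,Y)=F_0(X^\nu)\prod_{i=1}^N(Y-z_i(X))$ and $G(X^\nu,Y)=G_0(X^\nu)\prod_{e=1}^M(Y-w_e(X))$ with $z_i,w_e\in k((X))$; the notions below do not depend on $\nu$. $\mathrm{ord}_X0=\infty$; for $0\ne y\in k((X))$, $\mathrm{inco}_Xy\in k\setminus\{0\}$ is the coefficient of $X^{\mathrm{ord}_Xy}$ in $y$. $\mathrm{int}(F,Y)=\mathrm{ord}_XF(X,0)$. Root orders: $O_0(F)=\mathrm{ord}_XF_0$,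 and $O_1(F)<\dots<O_{\iota(F)}(F)$ are the distinct elements of $\{\frac1\nu\mathrm{ord}_Xz_i(X):1\le i\le N\}$ (rationals, possibly $O_{\iota(F)}(F)=\infty$); $\iota(F)$ is the index and $\widehat O(F)=O_{\iota(F)}(F)$. For $c\in\mathbb Q\cup\{\infty\}$ let $(<c),(=c),(>c)$ be the sets of $i$ with $\mathrm{ord}_Xz_i$ respectively $<,=,>$ $c\nu$; $L(F,c)=|(=c)|+|(>c)|$; $L_i(F)=L(F,O_i(F))$ for $1\le i\le\iota(F)$ and $\widehat L(F)=L_{\iota(F)}(F)$. $P^{(F,c)}(Y)=\mathrm{inco}_XF_0\prod_{i\in(<c)}\mathrm{inco}_Xz_i\prod_{i\in(=c)}(Y-\mathrm{inco}_Xz_i)\cdot Y^{|(>c)|}\in k[Y]$ (with $\mathrm{inco}_X0:=0$), and $P_i^{(F)}=P^{(F,O_i(F))}$ for $1\le i\le\iota(F)$. The same notation applies to $G$ with the $w_e$. Nonzero $P,Q\in k[Y]$ of degrees $n,m$ are related if $P^m=\lambda Q^n$ for some $\lambda\in k\setminus\{0\}$. For $0\le j\le\min(\iota(F),\iota(G))$, $\mathrm{UNP}(F)\|_j\mathrm{UNP}(G)$ means $MO_0(F)=NO_0(G)$ and $O_i(F)=O_i(G)$, $ML_i(F)=NL_i(G)$ for $1\le i\le j$. $\mathrm{UNP}(F)\|\mathrm{UNP}(G)$ means $\iota(F)=\iota(G)$ and $\mathrm{UNP}(F)\|_{\iota(F)}\mathrm{UNP}(G)$. $\mathrm{UNP}(F)<\mathrm{UNP}(G)$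 means $\widehat O(F)<\widehat O(G)$, $\widehat L(G)=1$, and either [$\iota(F)=\iota(G)$, $\mathrm{UNP}(F)\|_{\iota(F)-1}\mathrm{UNP}(G)$ and $M\widehat L(F)=N\widehat L(G)$] or [$\iota(F)=\iota(G)-1$ and $\mathrm{UNP}(F)\|_{\iota(F)}\mathrm{UNP}(G)$]. $\mathrm{UNP}(F)\,|.|\,\mathrm{UNP}(G)$ means $\mathrm{UNP}(F)\|\mathrm{UNP}(G)$ or $\mathrm{UNP}(F)<\mathrm{UNP}(G)$ or $\mathrm{UNP}(G)<\mathrm{UNP}(F)$. *)

theory Defs
  imports "HOL-Computational_Algebra.Formal_Laurent_Series"
          "HOL-Computational_Algebra.Polynomial"
          "HOL-Library.Extended_Real"
begin

text \<open>R = k((X))[Y] is rendered as the type ('k fls) poly. Orders live in ereal,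
  with ord_X 0 = infinity.\<close>

definition ordX :: "'a::zero fls \<Rightarrow> ereal" where
  "ordX f = (if f = 0 then \<infinity> else ereal (of_int (fls_subdegree f)))"

text \<open>Initial coefficient; for f = 0 this is 0 (the convention inco 0 := 0).\<close>
definition inco :: "'a::zero fls \<Rightarrow> 'a" where
  "inco f = fls_nth f (fls_subdegree f)"

definition jac :: "'a::field fls poly \<Rightarrow> 'a fls poly \<Rightarrow> 'a fls poly" where
  "jac F G = map_poly fls_deriv F * pderiv G - pderiv F * map_poly fls_deriv G"

definition intY :: "'a::zero fls poly \<Rightarrow> ereal" where
  "intY F = ordX (coeff F 0)"

definition root_factorization :: "'a::field fls poly \<Rightarrow> nat \<Rightarrow> 'a fls list \<Rightarrow> bool" where
  "root_factorization F nu zs \<longleftrightarrow> nu > 0 \<and>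
     map_poly (\<lambda>c. fls_compose_power c nu) F =
       smult (fls_compose_power (lead_coeff F) nu) (\<Prod>z\<leftarrow>zs. [:- z, 1:])"

definition rord :: "nat \<Rightarrow> 'a::zero fls \<Rightarrow> ereal" where
  "rord nu z = ordX z / ereal (real nu)"

definition O0 :: "'a::zero fls poly \<Rightarrow> ereal" where
  "O0 F = ordX (lead_coeff F)"

definition root_ords :: "nat \<Rightarrow> 'a::zero fls list \<Rightarrow> ereal set" where
  "root_ords nu zs = set (map (rord nu) zs)"

definition iota :: "nat \<Rightarrow> 'a::zero fls list \<Rightarrow> nat" where
  "iota nu zs = card (root_ords nu zs)"

definition Ord :: "nat \<Rightarrow> 'a::zero fls list \<Rightarrow> nat \<Rightarrow> ereal" where
  "Ord nu zs i = sorted_list_of_set (root_ords nu zs) ! (i - 1)"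

definition Ohat :: "nat \<Rightarrow> 'a::zero fls list \<Rightarrow> ereal" where
  "Ohat nu zs = Ord nu zs (iota nu zs)"

definition Lc :: "nat \<Rightarrow> 'a::zero fls list \<Rightarrow> ereal \<Rightarrow> nat" where
  "Lc nu zs c = length (filter (\<lambda>z. rord nu z \<ge> c) zs)"

definition Li :: "nat \<Rightarrow> 'a::zero fls list \<Rightarrow> nat \<Rightarrow> nat" where
  "Li nu zs i = Lc nu zs (Ord nu zs i)"

definition Lhat :: "nat \<Rightarrow> 'a::zero fls list \<Rightarrow> nat" where
  "Lhat nu zs = Li nu zs (iota nu zs)"

definition Pc :: "'a::comm_ring_1 fls poly \<Rightarrow> nat \<Rightarrow> 'a fls list \<Rightarrow> ereal \<Rightarrow> 'a poly" where
  "Pc F nu zs c =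
     smult (inco (lead_coeff F) * (\<Prod>z\<leftarrow>filter (\<lambda>z. rord nu z < c) zs. inco z))
       ((\<Prod>z\<leftarrow>filter (\<lambda>z. rord nu z = c) zs. [:- inco z, 1:])
        * monom 1 (length (filter (\<lambda>z. rord nu z > c) zs)))"

definition Ppoly :: "'a::comm_ring_1 fls poly \<Rightarrow> nat \<Rightarrow> 'a fls list \<Rightarrow> nat \<Rightarrow> 'a poly" where
  "Ppoly F nu zs i = Pc F nu zs (Ord nu zs i)"

definition related :: "'a::field poly \<Rightarrow> 'a poly \<Rightarrow> bool" where
  "related P Q \<longleftrightarrow> P \<noteq> 0 \<and> Q \<noteq> 0 \<and>
     (\<exists>c. c \<noteq> 0 \<and> P ^ degree Q = smult c (Q ^ degree P))"

definition unp_par_j ::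
  "'a::zero fls poly \<Rightarrow> nat \<Rightarrow> 'a fls list \<Rightarrow> 'a fls poly \<Rightarrow> nat \<Rightarrow> 'a fls list \<Rightarrow> nat \<Rightarrow> bool" where
  "unp_par_j F nu zs G mu ws j \<longleftrightarrow>
     j \<le> min (iota nu zs) (iota mu ws) \<and>
     ereal (real (degree G)) * O0 F = ereal (real (degree F)) * O0 G \<and>
     (\<forall>i. 1 \<le> i \<and> i \<le> j \<longrightarrow>
        Ord nu zs i = Ord mu ws i \<and> degree G * Li nu zs i = degree F * Li mu ws i)"

definition unp_par ::
  "'a::zero fls poly \<Rightarrow> nat \<Rightarrow> 'a fls list \<Rightarrow> 'a fls poly \<Rightarrow> nat \<Rightarrow> 'a fls list \<Rightarrow> bool" where
  "unp_par F nu zs G mu ws \<longleftrightarrow>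
     iota nu zs = iota mu ws \<and> unp_par_j F nu zs G mu ws (iota nu zs)"

definition unp_less ::
  "'a::zero fls poly \<Rightarrow> nat \<Rightarrow> 'a fls list \<Rightarrow> 'a fls poly \<Rightarrow> nat \<Rightarrow> 'a fls list \<Rightarrow> bool" where
  "unp_less F nu zs G mu ws \<longleftrightarrow>
     Ohat nu zs < Ohat mu ws \<and> Lhat mu ws = 1 \<and>
     ((iota nu zs = iota mu ws \<and> unp_par_j F nu zs G mu ws (iota nu zs - 1) \<and>
        degree G * Lhat nu zs = degree F * Lhat mu ws) \<or>
      (iota nu zs + 1 = iota mu ws \<and> unp_par_j F nu zs G mu ws (iota nu zs)))"

definition unp_rel ::
  "'a::zero fls poly \<Rightarrow> nat \<Rightarrow> 'a fls list \<Rightarrow> 'a fls poly \<Rightarrow> nat \<Rightarrow> 'a fls list \<Rightarrow> bool" where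
  "unp_rel F nu zs G mu ws \<longleftrightarrow>
     unp_par F nu zs G mu ws \<or> unp_less F nu zs G mu ws \<or> unp_less G mu ws F nu zs"

end

theory Submission
  imports Defs
begin

unbundle fps_syntax

lemma lin_pderiv_pow0:
  fixes g l :: "'a::idom poly"
  assumes l: "pderiv l = 1"
  shows "l * pderiv (l^p * g) = l^p * (smult (of_nat p) g + l * pderiv g)"
proof (cases p)
  case 0 then show ?thesis by simp
next
  case (Suc n)
  have "pderiv (l^p * g) = l^p * pderiv g + g * smult (of_nat p) (l^n)"
    using Suc by (simp only: pderiv_mult pderiv_power_Suc l mult_1_right)
  hence "l * pderiv (l^p * g) = l^p * (l * pderiv g) + smult (of_nat p) (l * l^n) * g"
    by (simp add: algebra_simps)
  also have "l * l^n = l^p" using Suc by simp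
  finally show ?thesis by (simp add: algebra_simps)
qed

lemma lin_pderiv_pow:
  fixes g :: "'a::idom poly"
  shows "[:-r,1:] * pderiv ([:-r,1:]^p * g) = [:-r,1:]^p * (smult (of_nat p) g + [:-r,1:] * pderiv g)"
  by (rule lin_pderiv_pow0) (simp add: pderiv_pCons)

lemma jac_poly_bad:
  fixes \<phi> \<psi> :: "'k::field_char_0 poly"
  assumes eq: "smult a (\<phi> * pderiv \<psi>) - smult b (pderiv \<phi> * \<psi>) = [:\<kappa>:]" and k: "\<kappa> \<noteq> 0"
  shows "order r \<phi> + order r \<psi> \<le> 1"
proof (rule ccontr)
  assume H: "\<not> ?thesis"
  define l where "l = [:-r,1::'k:]"
  obtain g where g: "\<phi> = l ^ order r \<phi> * g" using order_1[of r \<phi>] unfolding l_def by (auto elim: dvdE)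
  obtain h where h: "\<psi> = l ^ order r \<psi> * h" using order_1[of r \<psi>] unfolding l_def by (auto elim: dvdE)
  have dl: "pderiv l = 1" unfolding l_def by (simp add: pderiv_pCons)
  have dphi: "l * pderiv \<phi> = l ^ order r \<phi> * (smult (of_nat (order r \<phi>)) g + l * pderiv g)"
    by (subst g, rule lin_pderiv_pow0[OF dl])
  have dpsi: "l * pderiv \<psi> = l ^ order r \<psi> * (smult (of_nat (order r \<psi>)) h + l * pderiv h)"
    by (subst h, rule lin_pderiv_pow0[OF dl])
  have "l * [:\<kappa>:] = l * (smult a (\<phi> * pderiv \<psi>) - smult b (pderiv \<phi> * \<psi>))"
    using eq by simp
  also have "\<dots> = smult a (\<phi> * (l * pderiv \<psi>)) - smult b ((l * pderiv \<phi>) * \<psi>)"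
    by (simp add: algebra_simps)
  also have "\<dots> = l ^ (order r \<phi> + order r \<psi>) *
      (smult a (g * (smult (of_nat (order r \<psi>)) h + l * pderiv h)) -
       smult b ((smult (of_nat (order r \<phi>)) g + l * pderiv g) * h))"
    unfolding dphi dpsi by (subst (1) g, subst (2) h) (simp add: algebra_simps power_add)
  finally have E: "l * [:\<kappa>:] = l ^ (order r \<phi> + order r \<psi>) * (smult a (g * (smult (of_nat (order r \<psi>)) h + l * pderiv h)) -
       smult b ((smult (of_nat (order r \<phi>)) g + l * pderiv g) * h))" .
  have "2 \<le> order r \<phi> + order r \<psi>" using H by simp
  hence "l ^ 2 dvd l * [:\<kappa>:]" unfolding E by (intro dvd_mult2 le_imp_power_dvd)
  moreover have "l \<noteq> 0" unfolding l_def by simp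
  ultimately have "l dvd [:\<kappa>:]" by (metis dvd_mult_cancel_left power2_eq_square)
  hence "degree l \<le> degree [:\<kappa>:]" using k by (intro dvd_imp_degree_le) auto
  then show False unfolding l_def by simp
qed

lemma jac_poly_good:
  fixes \<phi> \<psi> :: "'k::field_char_0 poly"
  assumes eq: "smult a (\<phi> * pderiv \<psi>) = smult b (pderiv \<phi> * \<psi>)" and nz: "\<phi> \<noteq> 0" "\<psi> \<noteq> 0"
  shows "a * of_nat (order r \<psi>) = b * of_nat (order r \<phi>)"
proof -
  define l where "l = [:-r,1::'k:]"
  obtain g where g: "\<phi> = l ^ order r \<phi> * g" "\<not> l dvd g" using order_decomp[OF nz(1), of r] unfolding l_def by auto
  obtain h where h: "\<psi> = l ^ order r \<psi> * h" "\<not> l dvd h" using order_decomp[OF nz(2), of r] unfolding l_def by auto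
  have dl: "pderiv l = 1" unfolding l_def by (simp add: pderiv_pCons)
  have dphi: "l * pderiv \<phi> = l ^ order r \<phi> * (smult (of_nat (order r \<phi>)) g + l * pderiv g)"
    by (subst g(1), rule lin_pderiv_pow0[OF dl])
  have dpsi: "l * pderiv \<psi> = l ^ order r \<psi> * (smult (of_nat (order r \<psi>)) h + l * pderiv h)"
    by (subst h(1), rule lin_pderiv_pow0[OF dl])
  have "0 = l * (smult a (\<phi> * pderiv \<psi>) - smult b (pderiv \<phi> * \<psi>))"
    using eq by simp
  also have "\<dots> = smult a (\<phi> * (l * pderiv \<psi>)) - smult b ((l * pderiv \<phi>) * \<psi>)"
    by (simp add: algebra_simps)
  also have "\<dots> = l ^ (order r \<phi> + order r \<psi>) *
      (smult a (g * (smult (of_nat (order r \<psi>)) h + l * pderiv h)) -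
       smult b ((smult (of_nat (order r \<phi>)) g + l * pderiv g) * h))"
    unfolding dphi dpsi by (subst (1) g, subst (2) h) (simp add: algebra_simps power_add)
  finally have z: "smult a (g * (smult (of_nat (order r \<psi>)) h + l * pderiv h)) -
       smult b ((smult (of_nat (order r \<phi>)) g + l * pderiv g) * h) = 0"
    unfolding l_def by simp
  have "poly l r = 0" unfolding l_def by simp
  from arg_cong[OF z, of "\<lambda>p. poly p r"] this
  have "(a * of_nat (order r \<psi>) - b * of_nat (order r \<phi>)) * (poly g r * poly h r) = 0"
    by (simp add: algebra_simps)
  moreover have "poly g r \<noteq> 0" using g(2) unfolding l_def by (simp add: poly_eq_0_iff_dvd)
  moreover have "poly h r \<noteq> 0" using h(2) unfolding l_def by (simp add: poly_eq_0_iff_dvd)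
  ultimately show ?thesis by simp
qed

lemma orders_eq_smult:
  fixes x y :: "'k::field poly"
  assumes alg: "\<forall>p :: 'k poly. degree p > 0 \<longrightarrow> (\<exists>x. poly p x = 0)"
  shows "x \<noteq> 0 \<Longrightarrow> y \<noteq> 0 \<Longrightarrow> (\<forall>r. order r x = order r y) \<Longrightarrow> \<exists>c. c \<noteq> 0 \<and> x = smult c y"
proof (induction "degree x" arbitrary: x y)
  case 0
  have "degree y = 0"
  proof (rule ccontr)
    assume "degree y \<noteq> 0"
    then obtain r where "poly y r = 0" using alg by auto
    hence "order r y \<noteq> 0" using 0 order_root by blast
    moreover have "order r x = 0"
    proof (rule order_0I)
      obtain a where "x = [:a:]" using 0 degree0_coeffs by metis
      then show "poly x r \<noteq> 0" using 0 by auto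
    qed
    ultimately show False using 0 by simp
  qed
  then obtain a b where "x = [:a:]" "y = [:b:]" using 0 by (metis degree_0_id)
  then show ?case using 0 by (intro exI[of _ "a / b"]) auto
next
  case (Suc n)
  obtain r where r: "poly x r = 0" using alg Suc(2) by (metis zero_less_Suc)
  have "order r y \<noteq> 0" using Suc r order_root by metis
  hence "poly y r = 0" using order_root by blast
  obtain x1 where x1: "x = [:-r,1:] * x1" using r by (auto simp: poly_eq_0_iff_dvd elim: dvdE)
  obtain y1 where y1: "y = [:-r,1:] * y1" using \<open>poly y r = 0\<close> by (auto simp: poly_eq_0_iff_dvd elim: dvdE)
  have nz: "x1 \<noteq> 0" "y1 \<noteq> 0" using x1 y1 Suc by auto
  have "order s x1 = order s y1" for s
  proof -
    have "order s x = order s [:-r,1:] + order s x1" unfolding x1 by (rule order_mult) (use nz in \<open>metis mult_eq_0_iff one_neq_zero pCons_eq_0_iff\<close>)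
    moreover have "order s y = order s [:-r,1:] + order s y1" unfolding y1 by (rule order_mult) (use nz in \<open>metis mult_eq_0_iff one_neq_zero pCons_eq_0_iff\<close>)
    ultimately show ?thesis using Suc(5) by simp
  qed
  moreover have "n = degree x1"
  proof -
    have "degree ([:-r,1:] * x1) = degree [:-r,1::'k:] + degree x1" by (rule degree_mult_eq) (use nz in auto)
    moreover have "degree [:-r,1::'k:] = 1" by simp
    moreover have "Suc n = degree ([:-r,1:] * x1)" using Suc(2) x1 by (simp only:)
    ultimately show ?thesis by linarith
  qed
  ultimately obtain c where "c \<noteq> 0" "x1 = smult c y1" using Suc(1) nz by blast
  then show ?case using x1 y1 by auto
qed

lemma order_power: "p \<noteq> 0 \<Longrightarrow> order r (p ^ n) = n * order r (p :: 'k::idom poly)"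
  by (induction n) (auto simp: order_mult)

lemma related_from_orders:
  fixes P Q :: "'k::field poly"
  assumes alg: "\<forall>p :: 'k poly. degree p > 0 \<longrightarrow> (\<exists>x. poly p x = 0)"
    and nz: "P \<noteq> 0" "Q \<noteq> 0" and o: "\<forall>r. degree Q * order r P = degree P * order r Q"
  shows "related P Q"
proof -
  have "\<forall>r. order r (P ^ degree Q) = order r (Q ^ degree P)"
    using o nz by (simp add: order_power)
  then obtain c where "c \<noteq> 0" "P ^ degree Q = smult c (Q ^ degree P)"
    using orders_eq_smult[OF alg, of "P ^ degree Q" "Q ^ degree P"] nz by auto
  then show ?thesis unfolding related_def using nz by auto
qed

unbundle fps_syntax

lemma fls_mult_low:
  fixes f g :: "'a::idom fls"
  assumes f: "\<And>n. n < p \<Longrightarrow> f $$ n = 0" and g: "\<And>n. n < q \<Longrightarrow> g $$ n = 0"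
  shows "(f * g) $$ (p + q) = f $$ p * g $$ q" and "n < p + q \<Longrightarrow> (f * g) $$ n = 0"
proof -
  have A: "(f * g) $$ (p + q) = f $$ p * g $$ q \<and> (n < p + q \<longrightarrow> (f * g) $$ n = 0)"
  proof (cases "f = 0 \<or> g = 0")
    case True then show ?thesis by auto
  next
    case False
    have df: "p \<le> fls_subdegree f" using False f by (intro fls_subdegree_geI) auto
    have dg: "q \<le> fls_subdegree g" using False g by (intro fls_subdegree_geI) auto
    have low: "(f * g) $$ n = 0" if "n < p + q" for n
      using that df dg by (intro fls_times_nth_eq0) simp
    show ?thesis
    proof (cases "fls_subdegree f = p \<and> fls_subdegree g = q")
      case True then show ?thesis using low fls_times_base[of f g] by auto
    next
      case F2: False
      then have "f $$ p = 0 \<or> g $$ q = 0"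
        using df dg fls_subdegree_leI[of f p] fls_subdegree_leI[of g q] by force
      moreover have "(f * g) $$ (p + q) = 0" using F2 df dg by (intro fls_times_nth_eq0) auto
      ultimately show ?thesis using low by auto
    qed
  qed
  then show "(f * g) $$ (p + q) = f $$ p * g $$ q" by blast
  show "n < p + q \<Longrightarrow> (f * g) $$ n = 0" using A by blast
qed

lemma fls_deriv_poly:
  fixes F :: "'a::field_char_0 fls poly"
  shows "fls_deriv (poly F e) = poly (map_poly fls_deriv F) e + fls_deriv e * poly (pderiv F) e"
proof (induction F)
  case 0 then show ?case by simp
next
  case (pCons a p)
  have m: "map_poly fls_deriv (pCons a p) = pCons (fls_deriv a) (map_poly fls_deriv p)"
    by (simp add: map_poly_pCons)
  show ?case unfolding m using pCons(2) by (simp add: pderiv_pCons algebra_simps)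
qed

definition eu :: "'a::zero fls \<Rightarrow> int \<Rightarrow> 'a fls" where
  "eu u c = fls_shift (-c) u"

lemma jac_eval:
  fixes F G :: "'a::field_char_0 fls poly"
  assumes "degree (jac F G) = 0"
  shows "fls_deriv (poly F e) * poly (pderiv G) e - poly (pderiv F) e * fls_deriv (poly G e)
         = coeff (jac F G) 0"
proof -
  have "poly (jac F G) e = coeff (jac F G) 0" using assms by (metis degree_0_id poly_pCons mult_zero_right add_0_right poly_0)
  moreover have "poly (jac F G) e = poly (map_poly fls_deriv F) e * poly (pderiv G) e
      - poly (pderiv F) e * poly (map_poly fls_deriv G) e" unfolding jac_def by simp
  ultimately show ?thesis unfolding fls_deriv_poly by (simp add: algebra_simps)
qed

definition Cpoly :: "int \<Rightarrow> int \<Rightarrow> 'a::comm_monoid_add fls poly \<Rightarrow> 'a poly" where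
  "Cpoly c n H = (\<Sum>j\<le>degree H. monom (coeff H j $$ (n - c * int j)) j)"

lemma coeff_Cpoly: "coeff (Cpoly c n H) j = coeff H j $$ (n - c * int j)"
  unfolding Cpoly_def by (auto simp: coeff_sum coeff_monom coeff_eq_0)

lemma nth_power_shift:
  fixes u :: "'a::comm_ring_1"
  shows "(fls_shift (-c) (fls_const u)) ^ j = fls_shift (- (c * int j)) (fls_const (u ^ j))"
proof (induction j)
  case 0 then show ?case by simp
next
  case (Suc j)
  have "fls_shift (-c) (fls_const u) * fls_shift (- (c * int j)) (fls_const (u ^ j))
      = fls_shift (- (c * int (Suc j))) (fls_const u * fls_const (u ^ j))"
    by (simp add: fls_shifted_times_simps algebra_simps)
  then show ?case using Suc by (simp add: fls_const_mult_const mult.commute)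
qed

lemma poly_Cpoly: "poly (Cpoly c n H) u = poly H (fls_shift (-c) (fls_const (u::'a::field))) $$ n"
proof -
  have "poly H (fls_shift (-c) (fls_const u)) = (\<Sum>j\<le>degree H. coeff H j * (fls_shift (-c) (fls_const u)) ^ j)"
    by (simp add: poly_altdef)
  hence "poly H (fls_shift (-c) (fls_const u)) $$ n = (\<Sum>j\<le>degree H. coeff H j $$ (n - c * int j) * u ^ j)"
    by (simp add: fls_nth_sum nth_power_shift fls_shifted_times_simps mult.commute[of "coeff H _"] mult.commute[of "u ^ _"])
  moreover have "poly (Cpoly c n H) u = (\<Sum>j\<le>degree H. coeff H j $$ (n - c * int j) * u ^ j)"
    unfolding Cpoly_def by (simp add: poly_sum poly_monom)
  ultimately show ?thesis by simp
qed

lemma Cpoly_pderiv: "Cpoly c n (pderiv H) = pderiv (Cpoly c (n + c) (H :: 'a::field_char_0 fls poly))"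
proof (rule poly_eqI)
  fix j
  have "coeff (Cpoly c n (pderiv H)) j = (of_nat (Suc j) * coeff H (Suc j)) $$ (n - c * int j)"
    by (simp add: coeff_Cpoly coeff_pderiv)
  also have "\<dots> = of_nat (Suc j) * coeff H (Suc j) $$ (n - c * int j)" by (rule fls_mult_of_nat_nth)
  also have "\<dots> = coeff (pderiv (Cpoly c (n + c) H)) j"
    by (simp add: coeff_pderiv coeff_Cpoly algebra_simps)
  finally show "coeff (Cpoly c n (pderiv H)) j = coeff (pderiv (Cpoly c (n + c) H)) j" .
qed

unbundle fps_syntax

definition lowterm :: "int \<Rightarrow> 'a::comm_monoid_add fls poly \<Rightarrow> int \<Rightarrow> 'a poly \<Rightarrow> bool" where
  "lowterm c H \<alpha> \<phi> \<longleftrightarrow> (\<forall>n<\<alpha>. Cpoly c n H = 0) \<and> Cpoly c \<alpha> H = \<phi>"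

lemma lowterm_vals:
  fixes H :: "'a::field_char_0 fls poly"
  assumes "lowterm c H \<alpha> \<phi>"
  shows "n < \<alpha> \<Longrightarrow> poly H (fls_shift (-c) (fls_const u)) $$ n = 0"
    and "poly H (fls_shift (-c) (fls_const u)) $$ \<alpha> = poly \<phi> u"
  using assms unfolding lowterm_def by (auto simp flip: poly_Cpoly)

lemma lowterm_mult:
  fixes F G :: "'a::field_char_0 fls poly"
  assumes F: "lowterm c F \<alpha> \<phi>" and G: "lowterm c G \<beta> \<psi>"
  shows "lowterm c (F * G) (\<alpha> + \<beta>) (\<phi> * \<psi>)"
  unfolding lowterm_def
proof (intro conjI allI impI)
  fix n assume n: "n < \<alpha> + \<beta>"
  show "Cpoly c n (F * G) = 0"
  proof (rule poly_ext)
    fix u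
    show "poly (Cpoly c n (F * G)) u = poly 0 u"
      unfolding poly_Cpoly poly_mult
      using fls_mult_low(2)[OF lowterm_vals(1)[OF F] lowterm_vals(1)[OF G] n] by simp
  qed
next
  show "Cpoly c (\<alpha> + \<beta>) (F * G) = \<phi> * \<psi>"
  proof (rule poly_ext)
    fix u
    show "poly (Cpoly c (\<alpha> + \<beta>) (F * G)) u = poly (\<phi> * \<psi>) u"
      unfolding poly_Cpoly poly_mult
      using fls_mult_low(1)[OF lowterm_vals(1)[OF F] lowterm_vals(1)[OF G]]
        lowterm_vals(2)[OF F] lowterm_vals(2)[OF G] by simp
  qed
qed

lemma lowterm_const:
  fixes a :: "'a::field_char_0 fls"
  assumes "a \<noteq> 0"
  shows "lowterm c [:a:] (fls_subdegree a) [:inco a:]"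
  unfolding lowterm_def
proof (intro conjI allI impI)
  fix n assume "n < fls_subdegree a"
  then show "Cpoly c n [:a:] = 0"
    by (intro poly_eqI) (auto simp: coeff_Cpoly coeff_pCons split: nat.splits)
next
  show "Cpoly c (fls_subdegree a) [:a:] = [:inco a:]"
    by (intro poly_eqI) (auto simp: coeff_Cpoly coeff_pCons inco_def split: nat.splits)
qed

definition mo :: "int \<Rightarrow> 'a::zero fls \<Rightarrow> int" where
  "mo c z = (if z \<noteq> 0 \<and> fls_subdegree z < c then fls_subdegree z else c)"

definition lam :: "int \<Rightarrow> 'a::comm_ring_1 fls \<Rightarrow> 'a poly" where
  "lam c z = (if z \<noteq> 0 \<and> fls_subdegree z < c then [:- inco z:]
     else if z \<noteq> 0 \<and> fls_subdegree z = c then [:- inco z, 1:] else [:0, 1:])"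

lemma coeff_Cpoly_lin: "coeff (Cpoly c n [:-z, 1:]) j =
   (if j = 0 then - (z $$ n) else if j = 1 then (if n = c then 1 else 0) else 0)"
  for z :: "'a::comm_ring_1 fls"
  by (auto simp: coeff_Cpoly coeff_pCons split: nat.splits)

lemma lowterm_lin:
  fixes z :: "'a::field_char_0 fls"
  shows "lowterm c [:-z, 1:] (mo c z) (lam c z)"
  unfolding lowterm_def
proof (intro conjI allI impI)
  fix n assume n: "n < mo c z"
  have "z $$ n = 0"
  proof (cases "z = 0")
    case False
    then have "n < fls_subdegree z" using n unfolding mo_def by (auto split: if_splits)
    then show ?thesis by (simp add: nth_less_subdegree_zero)
  qed simp
  moreover have "n \<noteq> c" using n unfolding mo_def by (auto split: if_splits)
  ultimately show "Cpoly c n [:-z, 1:] = 0"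
    by (intro poly_eqI) (simp add: coeff_Cpoly_lin)
next
  show "Cpoly c (mo c z) [:-z, 1:] = lam c z"
  proof (cases "z \<noteq> 0 \<and> fls_subdegree z < c")
    case True
    then have "mo c z = fls_subdegree z" "lam c z = [:- inco z:]" unfolding mo_def lam_def by auto
    then show ?thesis using True
      by (intro poly_eqI) (simp add: coeff_Cpoly_lin inco_def coeff_pCons split: nat.split)
  next
    case F: False
    show ?thesis
    proof (cases "z \<noteq> 0 \<and> fls_subdegree z = c")
      case True
      then have "mo c z = c" "lam c z = [:- inco z, 1:]" unfolding mo_def lam_def by auto
      then show ?thesis using True
        by (intro poly_eqI) (simp add: coeff_Cpoly_lin inco_def coeff_pCons split: nat.split)
    next
      case False
      then have "mo c z = c" "lam c z = [:0, 1:]" using F unfolding mo_def lam_def by auto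
      moreover have "z $$ c = 0"
      proof (cases "z = 0")
        case False
        then have "c < fls_subdegree z" using F \<open>\<not> (z \<noteq> 0 \<and> fls_subdegree z = c)\<close> by auto
        then show ?thesis by (simp add: nth_less_subdegree_zero)
      qed simp
      ultimately show ?thesis
        by (intro poly_eqI) (simp add: coeff_Cpoly_lin coeff_pCons split: nat.split)
    qed
  qed
qed

lemma lowterm_prod:
  fixes zs :: "'a::field_char_0 fls list"
  shows "lowterm c (\<Prod>z\<leftarrow>zs. [:-z, 1:]) (\<Sum>z\<leftarrow>zs. mo c z) (\<Prod>z\<leftarrow>zs. lam c z)"
proof (induction zs)
  case Nil
  have "lowterm c [:1:] (fls_subdegree (1::'a fls)) [:inco (1::'a fls):]"
    by (rule lowterm_const) simp
  moreover have "inco (1::'a fls) = 1" by (simp add: inco_def)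
  ultimately show ?case by (simp add: one_pCons)
next
  case (Cons a zs)
  then show ?case using lowterm_mult[OF lowterm_lin Cons] by simp
qed

lemma lowterm_fact:
  fixes A :: "'a::field_char_0 fls"
  assumes "A \<noteq> 0"
  shows "lowterm c (smult A (\<Prod>z\<leftarrow>zs. [:-z, 1:]))
     (fls_subdegree A + (\<Sum>z\<leftarrow>zs. mo c z)) ([:inco A:] * (\<Prod>z\<leftarrow>zs. lam c z))"
  using lowterm_mult[OF lowterm_const[OF assms] lowterm_prod] by simp

lemma jac_level:
  fixes F G :: "'a::field_char_0 fls poly"
  assumes J: "degree (jac F G) = 0" and F: "lowterm c F \<alpha> \<phi>" and G: "lowterm c G \<beta> \<psi>"
  shows "\<exists>\<kappa>. smult (of_int \<alpha>) (\<phi> * pderiv \<psi>) - smult (of_int \<beta>) (pderiv \<phi> * \<psi>) = [:\<kappa>:]"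
proof -
  define \<kappa> where "\<kappa> = coeff (jac F G) 0 $$ (\<alpha> + \<beta> - c - 1)"
  have "smult (of_int \<alpha>) (\<phi> * pderiv \<psi>) - smult (of_int \<beta>) (pderiv \<phi> * \<psi>) = [:\<kappa>:]"
  proof (rule poly_ext)
    fix u
    define e where "e = fls_shift (-c) (fls_const (u::'a))"
    define f where "f = poly F e"
    define g where "g = poly G e"
    have f0: "n < \<alpha> \<Longrightarrow> f $$ n = 0" for n unfolding f_def e_def by (rule lowterm_vals(1)[OF F])
    have f1: "f $$ \<alpha> = poly \<phi> u" unfolding f_def e_def by (rule lowterm_vals(2)[OF F])
    have g0: "n < \<beta> \<Longrightarrow> g $$ n = 0" for n unfolding g_def e_def by (rule lowterm_vals(1)[OF G])
    have g1: "g $$ \<beta> = poly \<psi> u" unfolding g_def e_def by (rule lowterm_vals(2)[OF G])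
    have df0: "n < \<alpha> - 1 \<Longrightarrow> fls_deriv f $$ n = 0" for n using f0 by simp
    have df1: "fls_deriv f $$ (\<alpha> - 1) = of_int \<alpha> * poly \<phi> u" using f1 by simp
    have dg0: "n < \<beta> - 1 \<Longrightarrow> fls_deriv g $$ n = 0" for n using g0 by simp
    have dg1: "fls_deriv g $$ (\<beta> - 1) = of_int \<beta> * poly \<psi> u" using g1 by simp
    have pF: "poly (pderiv F) e $$ n = poly (pderiv (Cpoly c (n + c) F)) u" for n
      unfolding e_def by (simp flip: poly_Cpoly add: Cpoly_pderiv)
    have pG: "poly (pderiv G) e $$ n = poly (pderiv (Cpoly c (n + c) G)) u" for n
      unfolding e_def by (simp flip: poly_Cpoly add: Cpoly_pderiv)
    have pF0: "n < \<alpha> - c \<Longrightarrow> poly (pderiv F) e $$ n = 0" for n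
      unfolding pF using F unfolding lowterm_def by simp
    have pF1: "poly (pderiv F) e $$ (\<alpha> - c) = poly (pderiv \<phi>) u"
      unfolding pF using F unfolding lowterm_def by simp
    have pG0: "n < \<beta> - c \<Longrightarrow> poly (pderiv G) e $$ n = 0" for n
      unfolding pG using G unfolding lowterm_def by simp
    have pG1: "poly (pderiv G) e $$ (\<beta> - c) = poly (pderiv \<psi>) u"
      unfolding pG using G unfolding lowterm_def by simp
    have T1: "(fls_deriv f * poly (pderiv G) e) $$ ((\<alpha> - 1) + (\<beta> - c)) = of_int \<alpha> * poly \<phi> u * poly (pderiv \<psi>) u"
      using fls_mult_low(1)[of "\<alpha> - 1" "fls_deriv f" "\<beta> - c" "poly (pderiv G) e"] df0 df1 pG0 pG1 by simp
    have T2: "(poly (pderiv F) e * fls_deriv g) $$ ((\<alpha> - c) + (\<beta> - 1)) = poly (pderiv \<phi>) u * (of_int \<beta> * poly \<psi> u)"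
      using fls_mult_low(1)[of "\<alpha> - c" "poly (pderiv F) e" "\<beta> - 1" "fls_deriv g"] pF0 pF1 dg0 dg1 by simp
    have "(fls_deriv f * poly (pderiv G) e - poly (pderiv F) e * fls_deriv g) $$ (\<alpha> + \<beta> - c - 1) = \<kappa>"
      unfolding \<kappa>_def f_def g_def jac_eval[OF J] ..
    moreover have "\<alpha> + \<beta> - c - 1 = (\<alpha> - 1) + (\<beta> - c)" "\<alpha> + \<beta> - c - 1 = (\<alpha> - c) + (\<beta> - 1)" by simp_all
    ultimately have "of_int \<alpha> * poly \<phi> u * poly (pderiv \<psi>) u - poly (pderiv \<phi>) u * (of_int \<beta> * poly \<psi> u) = \<kappa>"
      using T1 T2 by (metis fls_minus_nth)
    then show "poly (smult (of_int \<alpha>) (\<phi> * pderiv \<psi>) - smult (of_int \<beta>) (pderiv \<phi> * \<psi>)) u = poly [:\<kappa>:] u"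
      by (simp add: algebra_simps)
  qed
  then show ?thesis by blast
qed

unbundle fps_syntax

lemma inco_nz: "z \<noteq> 0 \<Longrightarrow> inco (z :: 'a::zero fls) \<noteq> 0"
  unfolding inco_def by (simp add: nth_fls_subdegree_nonzero)

definition dd :: "'a::zero fls \<Rightarrow> 'a fls list \<Rightarrow> int \<Rightarrow> int" where
  "dd A zs c = fls_subdegree A + (\<Sum>z\<leftarrow>zs. mo c z)"

definition ph :: "'a::comm_ring_1 fls \<Rightarrow> 'a fls list \<Rightarrow> int \<Rightarrow> 'a poly" where
  "ph A zs c = [:inco A:] * (\<Prod>z\<leftarrow>zs. lam c z)"

definition LL :: "'a::zero fls list \<Rightarrow> int \<Rightarrow> nat" where
  "LL zs c = length (filter (\<lambda>z. z = 0 \<or> c \<le> fls_subdegree z) zs)"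

definition cnt_gt :: "'a::zero fls list \<Rightarrow> int \<Rightarrow> nat" where
  "cnt_gt zs c = length (filter (\<lambda>z. z = 0 \<or> c < fls_subdegree z) zs)"

definition cnt_eq :: "'a::zero fls list \<Rightarrow> int \<Rightarrow> nat" where
  "cnt_eq zs c = length (filter (\<lambda>z. z \<noteq> 0 \<and> fls_subdegree z = c) zs)"

definition cnt_eqr :: "'a::zero fls list \<Rightarrow> int \<Rightarrow> 'a \<Rightarrow> nat" where
  "cnt_eqr zs c r = length (filter (\<lambda>z. z \<noteq> 0 \<and> fls_subdegree z = c \<and> inco z = r) zs)"

lemma lam_nz: "lam c (z :: 'a::field fls) \<noteq> 0"
  unfolding lam_def using inco_nz[of z] by auto

lemma ph_nz: "A \<noteq> 0 \<Longrightarrow> ph A (zs :: 'a::field fls list) c \<noteq> 0"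
  unfolding ph_def using inco_nz[of A] lam_nz by (induction zs) auto

lemma order_lin: "order r [:-a, 1:] = (if a = r then 1 else (0::nat))"
  for a :: "'a::idom"
proof (cases "a = r")
  case True then show ?thesis using order_power_n_n[of r 1] by simp
next
  case False
  then have "poly [:-a, 1:] r \<noteq> 0" by simp
  then show ?thesis using False by (simp add: order_0I)
qed

lemma order_lam: "order r (lam c z) =
   (if z \<noteq> 0 \<and> fls_subdegree z = c \<and> inco z = r then 1 else 0) +
   (if r = 0 \<and> (z = 0 \<or> c < fls_subdegree z) then 1 else (0::nat))"
  for z :: "'a::field fls"
proof -
  consider "z \<noteq> 0 \<and> fls_subdegree z < c" | "z \<noteq> 0 \<and> fls_subdegree z = c" | "z = 0 \<or> c < fls_subdegree z"
    by force
  then show ?thesis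
  proof cases
    case 1 then show ?thesis unfolding lam_def using inco_nz[of z] by (auto intro: order_0I)
  next
    case 2 then show ?thesis unfolding lam_def using inco_nz[of z] order_lin[of r "inco z"] by auto
  next
    case 3
    then have "lam c z = [:-0, 1:]" unfolding lam_def by auto
    then show ?thesis using 3 order_lin[of r 0] by auto
  qed
qed

lemma order_ph: "A \<noteq> 0 \<Longrightarrow> order r (ph A zs c) = cnt_eqr zs c r + (if r = 0 then cnt_gt zs c else 0)"
  for zs :: "'a::field fls list"
proof (induction zs)
  case Nil
  then show ?case unfolding ph_def cnt_eqr_def cnt_gt_def using inco_nz[of A]
    by (auto intro: order_0I)
next
  case (Cons a zs)
  have "ph A (a # zs) c = lam c a * ph A zs c" unfolding ph_def by (simp add: algebra_simps)
  then have "order r (ph A (a # zs) c) = order r (lam c a) + order r (ph A zs c)"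
    using lam_nz ph_nz[OF Cons(2)] by (metis order_mult mult_eq_0_iff)
  then show ?case using Cons unfolding order_lam cnt_eqr_def cnt_gt_def by auto
qed

lemma degree_ph: "A \<noteq> 0 \<Longrightarrow> degree (ph A zs c) = LL zs c"
  for zs :: "'a::field fls list"
proof (induction zs)
  case Nil
  then show ?case unfolding ph_def LL_def by simp
next
  case (Cons a zs)
  have "ph A (a # zs) c = lam c a * ph A zs c" unfolding ph_def by (simp add: algebra_simps)
  then have "degree (ph A (a # zs) c) = degree (lam c a) + degree (ph A zs c)"
    using lam_nz ph_nz[OF Cons(2)] by (metis degree_mult_eq)
  moreover have "degree (lam c a) = (if a = 0 \<or> c \<le> fls_subdegree a then 1 else 0)"
    unfolding lam_def by auto
  ultimately show ?case using Cons unfolding LL_def by auto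
qed

lemma mo_Suc: "mo (c + 1) z = mo c z + (if z = 0 \<or> c + 1 \<le> fls_subdegree z then 1 else 0)"
  unfolding mo_def by auto

lemma dd_Suc: "dd A zs (c + 1) = dd A zs c + int (LL zs (c + 1))"
  unfolding dd_def LL_def
  by (induction zs) (auto simp: mo_Suc)

lemma cnt_gt_LL: "cnt_gt zs c = LL zs (c + 1)"
  unfolding cnt_gt_def LL_def by (metis zless_iff_Suc_zadd add.commute int_one_le_iff_zero_less zle_iff_zadd less_add_one order.strict_trans2 order_le_less linorder_not_le zle_add1_eq_le)

lemma LL_split: "LL zs c = cnt_gt zs c + cnt_eq zs c"
  unfolding LL_def cnt_gt_def cnt_eq_def by (induction zs) auto

lemma low_level:
  assumes "\<forall>z\<in>set zs. z \<noteq> 0 \<longrightarrow> c \<le> fls_subdegree z"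
  shows "LL zs c = length zs" "dd A zs c = fls_subdegree A + int (length zs) * c"
  using assms unfolding LL_def dd_def mo_def
  by (induction zs) (auto simp: algebra_simps)

lemma dd_le: "\<forall>z\<in>set zs. z \<noteq> 0 \<Longrightarrow> dd A zs c \<le> fls_subdegree A + (\<Sum>z\<leftarrow>zs. fls_subdegree z)"
  unfolding dd_def mo_def
  by (induction zs) (auto intro: add_mono)

lemma dd_top: "\<forall>z\<in>set zs. z \<noteq> 0 \<and> fls_subdegree z \<le> c \<Longrightarrow> dd A zs c = fls_subdegree A + (\<Sum>z\<leftarrow>zs. fls_subdegree z)"
  unfolding dd_def mo_def
  by (induction zs) auto

unbundle fps_syntax

definition goodc :: "'a::idom fls \<Rightarrow> 'a fls list \<Rightarrow> 'a fls \<Rightarrow> 'a fls list \<Rightarrow> int \<Rightarrow> bool" where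
  "goodc A zs B ws c \<longleftrightarrow> smult (of_int (dd A zs c)) (ph A zs c * pderiv (ph B ws c))
      - smult (of_int (dd B ws c)) (pderiv (ph A zs c) * ph B ws c) = 0"

definition Pc' :: "'a::zero fls \<Rightarrow> 'a fls list \<Rightarrow> 'a fls \<Rightarrow> 'a fls list \<Rightarrow> int \<Rightarrow> bool" where
  "Pc' A zs B ws c \<longleftrightarrow> int (length ws) * dd A zs c = int (length zs) * dd B ws c \<and>
      length ws * LL zs c = length zs * LL ws c"

lemma cnt_eqr0: "cnt_eqr zs c 0 = 0"
  unfolding cnt_eqr_def using inco_nz by (induction zs) auto

lemma step_good:
  fixes A B :: "'a::field_char_0 fls"
  assumes AB: "A \<noteq> 0" "B \<noteq> 0" and P: "Pc' A zs B ws c" and g: "goodc A zs B ws c"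
    and nz: "dd A zs c \<noteq> 0" and Nz: "zs \<noteq> []"
  shows "\<forall>r. length zs * order r (ph B ws c) = length ws * order r (ph A zs c)"
    and "Pc' A zs B ws (c + 1)"
proof -
  let ?a = "dd A zs c" and ?b = "dd B ws c" and ?N = "int (length zs)" and ?M = "int (length ws)"
  have g': "smult (of_int ?a) (ph A zs c * pderiv (ph B ws c)) = smult (of_int ?b) (pderiv (ph A zs c) * ph B ws c)"
    using g unfolding goodc_def by simp
  have o: "?a * int (order r (ph B ws c)) = ?b * int (order r (ph A zs c))" for r
  proof -
    have "(of_int ?a :: 'a) * of_nat (order r (ph B ws c)) = of_int ?b * of_nat (order r (ph A zs c))"
      by (rule jac_poly_good[OF g' ph_nz[OF AB(1)] ph_nz[OF AB(2)]])
    then have "(of_int (?a * int (order r (ph B ws c))) :: 'a) = of_int (?b * int (order r (ph A zs c)))"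
      by simp
    then show ?thesis by (simp only: of_int_eq_iff)
  qed
  have P1: "?M * ?a = ?N * ?b" using P unfolding Pc'_def by simp
  have pr: "length zs * order r (ph B ws c) = length ws * order r (ph A zs c)" for r
  proof -
    have "?a * (?N * int (order r (ph B ws c))) = ?a * (?M * int (order r (ph A zs c)))"
      using o[of r] P1 by (metis mult.left_commute mult.assoc)
    then have "?N * int (order r (ph B ws c)) = ?M * int (order r (ph A zs c))" using nz by simp
    then show ?thesis by (metis of_nat_mult of_nat_eq_iff)
  qed
  then show "\<forall>r. length zs * order r (ph B ws c) = length ws * order r (ph A zs c)" by blast
  have "length zs * cnt_gt ws c = length ws * cnt_gt zs c"
    using pr[of 0] unfolding order_ph[OF AB(1)] order_ph[OF AB(2)] cnt_eqr0 by simp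
  then have L: "length ws * LL zs (c + 1) = length zs * LL ws (c + 1)" unfolding cnt_gt_LL by simp
  then show "Pc' A zs B ws (c + 1)" using P1 unfolding Pc'_def dd_Suc
    by (simp add: algebra_simps) (metis of_nat_mult)
qed

lemma step_bad:
  fixes A B :: "'a::field_char_0 fls"
  assumes J: "\<exists>\<kappa>. smult (of_int (dd A zs c)) (ph A zs c * pderiv (ph B ws c))
      - smult (of_int (dd B ws c)) (pderiv (ph A zs c) * ph B ws c) = [:\<kappa>:]"
    and g: "\<not> goodc A zs B ws c"
  shows "order r (ph A zs c) + order r (ph B ws c) \<le> 1"
proof -
  obtain \<kappa> where k: "smult (of_int (dd A zs c)) (ph A zs c * pderiv (ph B ws c))
      - smult (of_int (dd B ws c)) (pderiv (ph A zs c) * ph B ws c) = [:\<kappa>:]" using J by blast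
  have "\<kappa> \<noteq> 0" using g k unfolding goodc_def by auto
  then show ?thesis by (rule jac_poly_bad[OF k])
qed

unbundle fps_syntax

context
  fixes A B :: "'a::field_char_0 fls" and zs ws :: "'a fls list"
  assumes AB: "A \<noteq> 0" "B \<noteq> 0" and ne: "zs \<noteq> []" "ws \<noteq> []"
    and J: "degree (jac (smult A (\<Prod>z\<leftarrow>zs. [:-z,1:])) (smult B (\<Prod>w\<leftarrow>ws. [:-w,1:]))) = 0"
    and par: "int (length ws) * fls_subdegree A = int (length zs) * fls_subdegree B"
    and neg: "((\<forall>z\<in>set zs. z \<noteq> 0) \<and> fls_subdegree A + (\<Sum>z\<leftarrow>zs. fls_subdegree z) < 0) \<or>
              ((\<forall>w\<in>set ws. w \<noteq> 0) \<and> fls_subdegree B + (\<Sum>w\<leftarrow>ws. fls_subdegree w) < 0)"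
begin

lemma jl: "\<exists>\<kappa>. smult (of_int (dd A zs c)) (ph A zs c * pderiv (ph B ws c))
      - smult (of_int (dd B ws c)) (pderiv (ph A zs c) * ph B ws c) = [:\<kappa>:]"
  using jac_level[OF J lowterm_fact[OF AB(1)] lowterm_fact[OF AB(2)]] unfolding dd_def ph_def .

lemma nzP: "Pc' A zs B ws c \<Longrightarrow> dd A zs c \<noteq> 0 \<and> dd B ws c \<noteq> 0"
proof -
  assume P: "Pc' A zs B ws c"
  have Np: "int (length zs) > 0" "int (length ws) > 0" using ne by auto
  have E: "int (length ws) * dd A zs c = int (length zs) * dd B ws c" using P unfolding Pc'_def by simp
  from neg show ?thesis
  proof
    assume "(\<forall>z\<in>set zs. z \<noteq> 0) \<and> fls_subdegree A + (\<Sum>z\<leftarrow>zs. fls_subdegree z) < 0"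
    then have "dd A zs c < 0" using dd_le[of zs A c] by auto
    then show ?thesis using E Np by (metis mult_eq_0_iff less_irrefl)
  next
    assume "(\<forall>w\<in>set ws. w \<noteq> 0) \<and> fls_subdegree B + (\<Sum>w\<leftarrow>ws. fls_subdegree w) < 0"
    then have "dd B ws c < 0" using dd_le[of ws B c] by auto
    then show ?thesis using E Np by (metis mult_eq_0_iff less_irrefl)
  qed
qed

lemma indP: "cl \<le> c \<Longrightarrow> Pc' A zs B ws cl \<Longrightarrow> (\<forall>c'. cl \<le> c' \<and> c' < c \<longrightarrow> goodc A zs B ws c') \<Longrightarrow> Pc' A zs B ws c"
proof (induction c rule: int_ge_induct)
  case base then show ?case by simp
next
  case (step i)
  have "Pc' A zs B ws i" using step by auto
  moreover have "goodc A zs B ws i" using step by auto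
  ultimately show ?case using step_good(2)[OF AB] nzP ne by blast
qed

lemma lowP:
  assumes "\<forall>z\<in>set zs. z \<noteq> 0 \<longrightarrow> c \<le> fls_subdegree z" "\<forall>w\<in>set ws. w \<noteq> 0 \<longrightarrow> c \<le> fls_subdegree w"
  shows "Pc' A zs B ws c"
  using low_level(1)[OF assms(1)] low_level(2)[OF assms(1), of A]
    low_level(1)[OF assms(2)] low_level(2)[OF assms(2), of B] par unfolding Pc'_def
  by (simp add: algebra_simps)

lemma LL_zero: "LL zs c = 0 \<Longrightarrow> LL ws c = 0 \<Longrightarrow> goodc A zs B ws c"
proof -
  assume "LL zs c = 0" "LL ws c = 0"
  then have "pderiv (ph A zs c) = 0" "pderiv (ph B ws c) = 0"
    using degree_ph[OF AB(1), of zs c] degree_ph[OF AB(2), of ws c] pderiv_eq_0_iff by auto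
  then show ?thesis unfolding goodc_def by simp
qed

lemma core:
  "\<exists>cl cs. (\<forall>z\<in>set zs. z \<noteq> 0 \<longrightarrow> cl \<le> fls_subdegree z) \<and> (\<forall>w\<in>set ws. w \<noteq> 0 \<longrightarrow> cl \<le> fls_subdegree w)
   \<and> (\<forall>c. cl \<le> c \<and> c < cs \<longrightarrow> (\<forall>r. length zs * order r (ph B ws c) = length ws * order r (ph A zs c)))
   \<and> (\<forall>c \<le> cs. length ws * LL zs c = length zs * LL ws c)
   \<and> ((cnt_gt zs cs = 0 \<and> cnt_gt ws cs = 0 \<and> cnt_eq zs cs > 0 \<and> cnt_eq ws cs > 0 \<and>
        int (length ws) * (fls_subdegree A + (\<Sum>z\<leftarrow>zs. fls_subdegree z)) =
        int (length zs) * (fls_subdegree B + (\<Sum>w\<leftarrow>ws. fls_subdegree w)))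
     \<or> (cnt_gt ws cs = 0 \<and> cnt_eq ws cs > 0 \<and> cnt_gt zs cs = 1)
     \<or> (cnt_gt zs cs = 0 \<and> cnt_eq zs cs > 0 \<and> cnt_gt ws cs = 1))"
proof -
  define S where "S = fls_subdegree ` {z \<in> set zs \<union> set ws. z \<noteq> 0}"
  have fS: "finite (insert 0 S)" unfolding S_def by simp
  define cl where "cl = Min (insert 0 S)"
  define ch where "ch = Max (insert 0 S) + 1"
  have clz: "\<forall>z\<in>set zs. z \<noteq> 0 \<longrightarrow> cl \<le> fls_subdegree z" unfolding cl_def S_def using fS by (auto intro!: Min_le)
  have clw: "\<forall>w\<in>set ws. w \<noteq> 0 \<longrightarrow> cl \<le> fls_subdegree w" unfolding cl_def S_def using fS by (auto intro!: Min_le)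
  have chz: "\<forall>z\<in>set zs. z \<noteq> 0 \<longrightarrow> fls_subdegree z < ch"
  proof (intro ballI impI)
    fix z assume "z \<in> set zs" "z \<noteq> 0"
    then have "fls_subdegree z \<in> insert 0 S" unfolding S_def by auto
    then have "fls_subdegree z \<le> Max (insert 0 S)" using fS by (rule Max_ge[rotated])
    then show "fls_subdegree z < ch" unfolding ch_def by simp
  qed
  have chw: "\<forall>w\<in>set ws. w \<noteq> 0 \<longrightarrow> fls_subdegree w < ch"
  proof (intro ballI impI)
    fix z assume "z \<in> set ws" "z \<noteq> 0"
    then have "fls_subdegree z \<in> insert 0 S" unfolding S_def by auto
    then have "fls_subdegree z \<le> Max (insert 0 S)" using fS by (rule Max_ge[rotated])
    then show "fls_subdegree z < ch" unfolding ch_def by simp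
  qed
  have clch: "cl < ch" unfolding cl_def ch_def using fS by (meson Max_ge Min_le insertI1 less_add_one order_le_less_trans order_trans)
  have Pcl: "Pc' A zs B ws cl" using lowP clz clw by blast
  have T2low: "length ws * LL zs c = length zs * LL ws c" if "c \<le> cl" for c
  proof -
    have "\<forall>z\<in>set zs. z \<noteq> 0 \<longrightarrow> c \<le> fls_subdegree z" "\<forall>w\<in>set ws. w \<noteq> 0 \<longrightarrow> c \<le> fls_subdegree w"
      using clz clw that by force+
    then show ?thesis using lowP unfolding Pc'_def by blast
  qed
  define Bd where "Bd = {c. cl \<le> c \<and> c < ch \<and> \<not> goodc A zs B ws c}"
  have fB: "finite Bd" unfolding Bd_def by (rule finite_subset[of _ "{cl..<ch}"]) auto
  have propc: "\<forall>r. length zs * order r (ph B ws c) = length ws * order r (ph A zs c)"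
    if "Pc' A zs B ws c" "goodc A zs B ws c" for c
    using step_good(1)[OF AB that] nzP[OF that(1)] ne by blast
  show ?thesis
  proof (cases "Bd = {}")
    case False
    define c0 where "c0 = Min Bd"
    have c0B: "c0 \<in> Bd" unfolding c0_def using False fB by simp
    have below: "goodc A zs B ws c" if "cl \<le> c" "c < c0" for c
    proof (rule ccontr)
      assume "\<not> goodc A zs B ws c"
      then have "c \<in> Bd" using that c0B unfolding Bd_def by auto
      then show False using that fB unfolding c0_def by (meson Min_le not_le)
    qed
    have Pc: "Pc' A zs B ws c" if "cl \<le> c" "c \<le> c0" for c
      using indP[OF that(1) Pcl] below that by auto
    have bad: "\<not> goodc A zs B ws c0" using c0B unfolding Bd_def by auto
    have P0: "Pc' A zs B ws c0" using Pc c0B unfolding Bd_def by auto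
    have T1: "\<forall>c. cl \<le> c \<and> c < c0 \<longrightarrow> (\<forall>r. length zs * order r (ph B ws c) = length ws * order r (ph A zs c))"
      using propc Pc below by auto
    have T2: "\<forall>c \<le> c0. length ws * LL zs c = length zs * LL ws c"
      using T2low Pc unfolding Pc'_def by (metis linorder_le_cases)
    have o0: "cnt_gt zs c0 + cnt_gt ws c0 \<le> 1"
      using step_bad[OF jl bad, of 0] unfolding order_ph[OF AB(1)] order_ph[OF AB(2)] cnt_eqr0 by simp
    have LLpos: "LL zs c0 > 0 \<and> LL ws c0 > 0"
    proof (rule ccontr)
      assume "\<not> ?thesis"
      then have "LL zs c0 = 0 \<and> LL ws c0 = 0" using P0 ne unfolding Pc'_def by (metis mult_is_0 length_0_conv neq0_conv)
      then show False using LL_zero bad by blast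
    qed
    have c1: "cnt_gt zs c0 = 0 \<Longrightarrow> cnt_eq zs c0 > 0" using LLpos LL_split[of zs c0] by simp
      have c2: "cnt_gt ws c0 = 0 \<Longrightarrow> cnt_eq ws c0 > 0" using LLpos LL_split[of ws c0] by simp
      have c3: "int (length ws) * (fls_subdegree A + (\<Sum>z\<leftarrow>zs. fls_subdegree z)) =
        int (length zs) * (fls_subdegree B + (\<Sum>w\<leftarrow>ws. fls_subdegree w))"
        if "cnt_gt zs c0 = 0" "cnt_gt ws c0 = 0"
      proof -
        have "\<forall>z\<in>set zs. z \<noteq> 0 \<and> fls_subdegree z \<le> c0" using that(1) unfolding cnt_gt_def
          by (auto simp: filter_empty_conv)
        moreover have "\<forall>w\<in>set ws. w \<noteq> 0 \<and> fls_subdegree w \<le> c0" using that(2) unfolding cnt_gt_def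
          by (auto simp: filter_empty_conv)
        ultimately show ?thesis using P0 dd_top unfolding Pc'_def by metis
      qed
      have disj: "(cnt_gt zs c0 = 0 \<and> cnt_gt ws c0 = 0 \<and> cnt_eq zs c0 > 0 \<and> cnt_eq ws c0 > 0 \<and>
        int (length ws) * (fls_subdegree A + (\<Sum>z\<leftarrow>zs. fls_subdegree z)) =
        int (length zs) * (fls_subdegree B + (\<Sum>w\<leftarrow>ws. fls_subdegree w)))
     \<or> (cnt_gt ws c0 = 0 \<and> cnt_eq ws c0 > 0 \<and> cnt_gt zs c0 = 1)
     \<or> (cnt_gt zs c0 = 0 \<and> cnt_eq zs c0 > 0 \<and> cnt_gt ws c0 = 1)"
        using o0 c1 c2 c3 by (cases "cnt_gt zs c0"; cases "cnt_gt ws c0") auto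
    show ?thesis using clz clw T1 T2 disj by blast
  next
    case True
    have good: "goodc A zs B ws c" if "cl \<le> c" "c < ch" for c using True that unfolding Bd_def by auto
    have Pc: "Pc' A zs B ws c" if "cl \<le> c" "c \<le> ch" for c
      using indP[OF that(1) Pcl] good that by auto
    have LLch: "LL xs ch = length (filter (\<lambda>z. z = 0) xs)" if "\<forall>z\<in>set xs. z \<noteq> 0 \<longrightarrow> fls_subdegree z < ch" for xs :: "'a fls list"
      unfolding LL_def using that by (induction xs) auto
    have Pch: "length ws * LL zs ch = length zs * LL ws ch" using Pc[of ch] clch unfolding Pc'_def by simp
    have allnz: "(\<forall>z\<in>set zs. z \<noteq> 0) \<and> (\<forall>w\<in>set ws. w \<noteq> 0)"
    proof -
      have "LL zs ch = 0 \<or> LL ws ch = 0"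
        using neg LLch[OF chz] LLch[OF chw] by (auto simp: filter_empty_conv)
      then have "LL zs ch = 0 \<and> LL ws ch = 0" using Pch ne by (metis mult_is_0 length_0_conv)
      then show ?thesis using LLch[OF chz] LLch[OF chw] by (auto simp: filter_empty_conv)
    qed
    define cs where "cs = Max (fls_subdegree ` set zs)"
    have fz: "finite (fls_subdegree ` set zs)" "fls_subdegree ` set zs \<noteq> {}" using ne by auto
    have csz: "\<forall>z\<in>set zs. fls_subdegree z \<le> cs" unfolding cs_def using fz by auto
    obtain z0 where z0: "z0 \<in> set zs" "fls_subdegree z0 = cs" unfolding cs_def using Max_in[OF fz] by auto
    have cscl: "cl \<le> cs" using clz z0 allnz by auto
    have csch: "cs < ch" using chz z0 allnz by auto
    have gz: "cnt_gt zs cs = 0" unfolding cnt_gt_def using csz allnz by (auto simp: filter_empty_conv)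
    have ez: "cnt_eq zs cs > 0" unfolding cnt_eq_def using z0 allnz
      by (metis (mono_tags, lifting) filter_empty_conv length_greater_0_conv)
    have P1: "Pc' A zs B ws (cs + 1)" using Pc[of "cs + 1"] cscl csch by simp
    have gw: "cnt_gt ws cs = 0"
      using P1 gz ne unfolding Pc'_def cnt_gt_LL by (metis mult_is_0 length_0_conv)
    have Pcs: "Pc' A zs B ws cs" using Pc[of cs] cscl csch by simp
    have ew: "cnt_eq ws cs > 0"
    proof -
      have "LL zs cs > 0" using LL_split[of zs cs] ez by simp
      then have "LL ws cs > 0" using Pcs ne unfolding Pc'_def by (metis mult_is_0 length_0_conv neq0_conv)
      then show ?thesis using LL_split[of ws cs] gw by simp
    qed
    have c3: "int (length ws) * (fls_subdegree A + (\<Sum>z\<leftarrow>zs. fls_subdegree z)) =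
        int (length zs) * (fls_subdegree B + (\<Sum>w\<leftarrow>ws. fls_subdegree w))"
    proof -
      have "\<forall>w\<in>set ws. w \<noteq> 0 \<and> fls_subdegree w \<le> cs" using gw unfolding cnt_gt_def
        by (auto simp: filter_empty_conv)
      moreover have "\<forall>z\<in>set zs. z \<noteq> 0 \<and> fls_subdegree z \<le> cs" using csz allnz by auto
      ultimately show ?thesis using Pcs dd_top unfolding Pc'_def by metis
    qed
      have T1: "\<forall>c. cl \<le> c \<and> c < cs \<longrightarrow> (\<forall>r. length zs * order r (ph B ws c) = length ws * order r (ph A zs c))"
        using propc Pc good csch by auto
      have T2: "\<forall>c\<le>cs. length ws * LL zs c = length zs * LL ws c"
        using T2low Pc csch unfolding Pc'_def by (metis linorder_le_cases order.trans order.strict_implies_order)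
      have disj: "(cnt_gt zs cs = 0 \<and> cnt_gt ws cs = 0 \<and> cnt_eq zs cs > 0 \<and> cnt_eq ws cs > 0 \<and>
        int (length ws) * (fls_subdegree A + (\<Sum>z\<leftarrow>zs. fls_subdegree z)) =
        int (length zs) * (fls_subdegree B + (\<Sum>w\<leftarrow>ws. fls_subdegree w)))
     \<or> (cnt_gt ws cs = 0 \<and> cnt_eq ws cs > 0 \<and> cnt_gt zs cs = 1)
     \<or> (cnt_gt zs cs = 0 \<and> cnt_eq zs cs > 0 \<and> cnt_gt ws cs = 1)"
        using gz gw ez ew c3 by blast
    show ?thesis using clz clw T1 T2 disj by blast
  qed
qed

end

unbundle fps_syntax

abbreviation cp :: "nat \<Rightarrow> 'a::zero fls \<Rightarrow> 'a fls" where
  "cp d f \<equiv> fls_compose_power f d"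

lemma cp_nth: "d > 0 \<Longrightarrow> cp d f $$ n = (if int d dvd n then f $$ (n div int d) else 0)"
  by (rule fls_nth_compose_power)

lemma cp_eq0: "d > 0 \<Longrightarrow> cp d f = 0 \<longleftrightarrow> f = 0"
proof
  assume d: "d > 0" and z: "cp d f = 0"
  show "f = 0"
  proof (rule fls_eqI)
    fix n
    have "cp d f $$ (int d * n) = f $$ n" using d by (simp add: cp_nth)
    then show "f $$ n = 0 $$ n" using z by simp
  qed
qed simp

lemma cp_subdegree: "d > 0 \<Longrightarrow> f \<noteq> 0 \<Longrightarrow> fls_subdegree (cp d f) = int d * fls_subdegree f"
proof (rule fls_subdegree_eqI)
  assume d: "d > 0" and f: "f \<noteq> 0"
  show "cp d f $$ (int d * fls_subdegree f) \<noteq> 0" using d f by (simp add: cp_nth nth_fls_subdegree_nonzero)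
  fix k assume k: "k < int d * fls_subdegree f"
  show "cp d f $$ k = 0"
  proof (cases "int d dvd k")
    case True
    then obtain m where m: "k = int d * m" by blast
    then have "m < fls_subdegree f" using k d by (simp add: mult_less_cancel_left)
    then show ?thesis using d m by (simp add: cp_nth nth_less_subdegree_zero)
  qed (use d in \<open>simp add: cp_nth\<close>)
qed

lemma cp_inco: "d > 0 \<Longrightarrow> inco (cp d f) = inco f"
  by (cases "f = 0") (simp_all add: inco_def cp_subdegree cp_nth)

lemma cp_cp: "a > 0 \<Longrightarrow> b > 0 \<Longrightarrow> cp b (cp a f) = cp (a * b) f"
proof (rule fls_eqI)
  fix n assume a: "a > 0" and b: "b > 0"
  have D: "int b dvd n \<and> int a dvd n div int b \<longleftrightarrow> int (a * b) dvd n"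
    by (metis dvd_div_iff_mult dvd_mult_left mult.commute of_nat_0_less_iff of_nat_mult a b
        dvd_mult_div_cancel zdvd_mult_cancel1 less_irrefl dvd_div_mult_self)
  have V: "n div int b div int a = n div int (a * b)"
    by (metis zdiv_zmult2_eq of_nat_0_le_iff mult.commute of_nat_mult)
  have L: "cp b (cp a f) $$ n = (if int b dvd n \<and> int a dvd n div int b then f $$ (n div int b div int a) else 0)"
    using a b by (simp add: cp_nth)
  have R: "cp (a * b) f $$ n = (if int (a * b) dvd n then f $$ (n div int (a * b)) else 0)"
    using a b by (intro cp_nth) simp
  show "cp b (cp a f) $$ n = cp (a * b) f $$ n"
    unfolding L R D V ..
qed

lemma cp_mult: "cp d (f * g) = cp d f * cp d (g :: 'a::idom fls)"
  by simp

context
  fixes h :: "'a::idom \<Rightarrow> 'b::idom"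
  assumes h0: "h 0 = 0" and h1: "h 1 = 1" and hadd: "\<And>x y. h (x + y) = h x + h y"
    and hmult: "\<And>x y. h (x * y) = h x * h y"
begin

lemma hneg: "h (- x) = - h x"
proof -
  have "h x + h (- x) = 0" using hadd[of x "-x"] h0 by simp
  then show ?thesis by (metis neg_eq_iff_add_eq_0)
qed

lemma hdiff: "h (x - y) = h x - h y"
  by (metis diff_conv_add_uminus hadd hneg)

lemma hnat: "h (of_nat n * x) = of_nat n * h x"
  by (induction n) (simp_all add: h0 hadd distrib_right)

lemma map_poly_add_h: "map_poly h (p + q) = map_poly h p + map_poly h q"
  by (intro poly_eqI) (simp add: coeff_map_poly h0 hadd)

lemma map_poly_diff_h: "map_poly h (p - q) = map_poly h p - map_poly h q"
  by (intro poly_eqI) (simp add: coeff_map_poly h0 hdiff)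

lemma map_poly_mult_h: "map_poly h (p * q) = map_poly h p * map_poly h q"
proof (induction p)
  case 0 then show ?case by simp
next
  case (pCons a p)
  have "map_poly h (pCons a p * q) = map_poly h (smult a q + pCons 0 (p * q))" by simp
  also have "\<dots> = smult (h a) (map_poly h q) + pCons 0 (map_poly h p * map_poly h q)"
    by (simp only: map_poly_add_h map_poly_smult[of h, OF h0 hmult] map_poly_pCons[of h, OF h0] h0 pCons(2))
  also have "\<dots> = map_poly h (pCons a p) * map_poly h q" by (simp add: map_poly_pCons h0)
  finally show ?case .
qed

lemma map_poly_prod_h: "map_poly h (\<Prod>z\<leftarrow>zs. [:-z, 1:]) = (\<Prod>z\<leftarrow>zs. [:- h z, 1:])"
proof (induction zs)
  case Nil then show ?case by (simp add: map_poly_pCons h0 h1 one_pCons)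
next
  case (Cons a zs)
  have "map_poly h [:-a, 1:] = [:- h a, 1:]" by (simp add: map_poly_pCons h0 h1 hneg)
  then show ?case using Cons by (simp only: prod_list.Cons list.map map_poly_mult_h)
qed

lemma map_poly_pderiv_h: "map_poly h (pderiv p) = pderiv (map_poly h p)"
  by (intro poly_eqI) (simp only: coeff_map_poly[of h, OF h0] coeff_pderiv hnat)

end

lemma fls_deriv_cp:
  fixes f :: "'a::field_char_0 fls"
  assumes d: "d > 0"
  shows "fls_deriv (cp d f) = fls_shift (- (int d - 1)) (fls_const (of_nat d)) * cp d (fls_deriv f)"
proof (rule fls_eqI)
  fix n
  have R: "(fls_shift (- (int d - 1)) (fls_const (of_nat d)) * cp d (fls_deriv f)) $$ n
      = of_nat d * cp d (fls_deriv f) $$ (n - (int d - 1))"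
    by (simp add: fls_shifted_times_simps algebra_simps)
  show "fls_deriv (cp d f) $$ n = (fls_shift (- (int d - 1)) (fls_const (of_nat d)) * cp d (fls_deriv f)) $$ n"
  proof (cases "int d dvd n + 1")
    case True
    then obtain m where m: "n + 1 = int d * m" by blast
    have "n - (int d - 1) = int d * (m - 1)" using m by (simp add: algebra_simps)
    then have "cp d (fls_deriv f) $$ (n - (int d - 1)) = of_int m * f $$ m"
      using d by (simp add: cp_nth)
    moreover have "fls_deriv (cp d f) $$ n = of_int (int d * m) * f $$ m"
      using d m by (simp add: cp_nth)
    ultimately show ?thesis unfolding R by simp
  next
    case False
    have "\<not> int d dvd n - (int d - 1)"
    proof
      assume "int d dvd n - (int d - 1)"
      then have "int d dvd (n - (int d - 1)) + int d" by (rule dvd_add) simp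
      then show False using False by (simp add: algebra_simps)
    qed
    then show ?thesis unfolding R using d False by (simp add: cp_nth)
  qed
qed

unbundle fps_syntax

lemma ordX_cp: "d > 0 \<Longrightarrow> ordX (cp d z) = (if z = 0 then \<infinity> else ereal (real d * of_int (fls_subdegree z)))"
  by (auto simp: ordX_def cp_eq0 cp_subdegree)

lemma rord_cp: "nu > 0 \<Longrightarrow> mu > 0 \<Longrightarrow> rord (nu * mu) (cp mu z) = rord nu (z :: 'a::zero fls)"
proof -
  assume a: "nu > 0" "mu > 0"
  show ?thesis
  proof (cases "z = 0")
    case True then show ?thesis using a by (simp add: rord_def ordX_def)
  next
    case False
    then have "ordX (cp mu z) = ereal (real mu * of_int (fls_subdegree z))" using a by (simp add: ordX_cp)
    moreover have "ordX z = ereal (of_int (fls_subdegree z))" using False by (simp add: ordX_def)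
    ultimately show ?thesis using a unfolding rord_def by (simp add: field_simps)
  qed
qed

context
  fixes f :: "'a::comm_ring_1 fls \<Rightarrow> 'a fls" and D nu :: nat and zs :: "'a fls list"
  assumes fr: "\<And>z. rord D (f z) = rord nu z" and fi: "\<And>z. inco (f z) = inco z"
begin

lemma map_rord: "map (rord D) (map f zs) = map (rord nu) zs"
  by (simp add: fr)

lemma root_ords_f: "root_ords D (map f zs) = root_ords nu zs"
  unfolding root_ords_def map_rord ..

lemma iota_f: "iota D (map f zs) = iota nu zs"
  unfolding iota_def root_ords_f ..

lemma Ord_f: "Ord D (map f zs) = Ord nu zs"
  unfolding Ord_def root_ords_f ..

lemma Ohat_f: "Ohat D (map f zs) = Ohat nu zs"
  unfolding Ohat_def Ord_f iota_f ..

lemma Lc_f: "Lc D (map f zs) = Lc nu zs"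
  unfolding Lc_def by (simp add: fun_eq_iff filter_map comp_def fr)

lemma Li_f: "Li D (map f zs) = Li nu zs"
  unfolding Li_def Lc_f Ord_f ..

lemma Lhat_f: "Lhat D (map f zs) = Lhat nu zs"
  unfolding Lhat_def Li_f iota_f ..

lemma Pc_f: "Pc F D (map f zs) = Pc F nu zs"
  unfolding Pc_def by (simp add: fun_eq_iff filter_map comp_def fr fi)

lemma Ppoly_f: "Ppoly F D (map f zs) = Ppoly F nu zs"
  unfolding Ppoly_def Pc_f Ord_f ..

end

unbundle fps_syntax

definition lv :: "nat \<Rightarrow> int \<Rightarrow> ereal" where
  "lv D c = ereal (real_of_int c / real D)"

context
  fixes D :: nat
  assumes D: "D > 0"
begin

lemma lv_less: "lv D a < lv D b \<longleftrightarrow> a < b"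
  using D unfolding lv_def by (simp add: divide_less_cancel)

lemma lv_le: "lv D a \<le> lv D b \<longleftrightarrow> a \<le> b"
  using D unfolding lv_def by (simp add: divide_le_cancel)

lemma lv_eq: "lv D a = lv D b \<longleftrightarrow> a = b"
  using lv_le by (metis order.antisym order_refl)

lemma lv_fin: "lv D a \<noteq> \<infinity>" "lv D a < \<infinity>"
  unfolding lv_def by simp_all

lemma rord_eq: "rord D z = (if z = 0 then \<infinity> else lv D (fls_subdegree z))"
  using D unfolding rord_def ordX_def lv_def by simp

lemma rord_ge_lv: "lv D c \<le> rord D z \<longleftrightarrow> z = 0 \<or> c \<le> fls_subdegree z"
  unfolding rord_eq by (simp add: lv_le)

lemma rord_gt_lv: "lv D c < rord D z \<longleftrightarrow> z = 0 \<or> c < fls_subdegree z"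
  unfolding rord_eq by (simp add: lv_less lv_fin)

lemma rord_eq_lv: "rord D z = lv D c \<longleftrightarrow> z \<noteq> 0 \<and> fls_subdegree z = c"
proof (cases "z = 0")
  case True
  then show ?thesis unfolding rord_eq using lv_fin(1)[of c] by (metis (no_types))
next
  case False
  then show ?thesis unfolding rord_eq by (simp add: lv_eq)
qed

lemma rord_lt_lv: "rord D z < lv D c \<longleftrightarrow> z \<noteq> 0 \<and> fls_subdegree z < c"
  unfolding rord_eq by (simp add: lv_less)

lemma Lc_lv: "Lc D zs (lv D c) = LL zs c"
  unfolding Lc_def LL_def by (simp add: rord_ge_lv)

lemma SA_lv: "lv D c \<in> root_ords D zs \<longleftrightarrow> cnt_eq zs c > 0"
proof -
  have "lv D c \<in> root_ords D zs \<longleftrightarrow> (\<exists>z\<in>set zs. rord D z = lv D c)"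
    unfolding root_ords_def by (auto simp: image_iff) (metis)
  also have "\<dots> \<longleftrightarrow> (\<exists>z\<in>set zs. z \<noteq> 0 \<and> fls_subdegree z = c)"
    by (simp only: rord_eq_lv)
  also have "\<dots> \<longleftrightarrow> cnt_eq zs c > 0"
    unfolding cnt_eq_def by (auto simp: filter_empty_conv)
  finally show ?thesis .
qed

lemma SA_elem: "x \<in> root_ords D zs \<Longrightarrow> x = \<infinity> \<or> (\<exists>z\<in>set zs. z \<noteq> 0 \<and> x = lv D (fls_subdegree z))"
  unfolding root_ords_def by (auto simp: rord_eq)

lemma gt0: "cnt_gt zs c = 0 \<longleftrightarrow> (\<forall>x\<in>root_ords D zs. x \<le> lv D c)"
  unfolding cnt_gt_def root_ords_def by (auto simp: filter_empty_conv rord_gt_lv[symmetric] not_less)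

lemma gt1:
  assumes "cnt_gt zs c = 1"
  shows "\<exists>s>lv D c. root_ords D zs \<inter> {lv D c<..} = {s} \<and> Lc D zs s = 1 \<and>
     (lv D c \<notin> root_ords D zs \<longrightarrow> Lc D zs (lv D c) = 1)"
proof -
  have L1: "length (filter (\<lambda>z. lv D c < rord D z) zs) = 1"
    using assms unfolding cnt_gt_def by (simp add: rord_gt_lv)
  then obtain z0 where z0: "filter (\<lambda>z. lv D c < rord D z) zs = [z0]"
    using length_Suc_conv[of "filter (\<lambda>z. lv D c < rord D z) zs" 0] by auto
  have "z0 \<in> set (filter (\<lambda>z. lv D c < rord D z) zs)" using z0 by simp
  then have z0in: "z0 \<in> set zs" "lv D c < rord D z0" by auto
  have uniq: "rord D z = rord D z0" if "z \<in> set zs" "lv D c < rord D z" for z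
  proof -
    have "z \<in> set (filter (\<lambda>z. lv D c < rord D z) zs)" using that by simp
    then show ?thesis using z0 by simp
  qed
  define s where "s = rord D z0"
  have S: "root_ords D zs \<inter> {lv D c<..} = {s}"
  proof
    show "root_ords D zs \<inter> {lv D c<..} \<subseteq> {s}"
    proof
      fix x assume "x \<in> root_ords D zs \<inter> {lv D c<..}"
      then obtain z where "z \<in> set zs" "x = rord D z" "lv D c < x" unfolding root_ords_def by auto
      then show "x \<in> {s}" using uniq[of z] unfolding s_def by simp
    qed
    show "{s} \<subseteq> root_ords D zs \<inter> {lv D c<..}"
      using z0in unfolding root_ords_def s_def by simp
  qed
  have Ls: "Lc D zs s = 1"
  proof -
    have "length (filter (\<lambda>z. s \<le> rord D z) zs) \<le> length (filter (\<lambda>z. lv D c < rord D z) zs)"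
    proof -
      have "filter (\<lambda>z. s \<le> rord D z) zs = filter (\<lambda>z. s \<le> rord D z) (filter (\<lambda>z. lv D c < rord D z) zs)"
        unfolding filter_filter using z0in(2) unfolding s_def by (intro filter_cong) auto
      then show ?thesis by (metis length_filter_le)
    qed
    moreover have "length (filter (\<lambda>z. s \<le> rord D z) zs) > 0"
      using z0in unfolding s_def by (metis (mono_tags, lifting) filter_empty_conv length_greater_0_conv order_refl)
    ultimately show ?thesis using L1 unfolding Lc_def by linarith
  qed
  have "lv D c \<notin> root_ords D zs \<longrightarrow> Lc D zs (lv D c) = 1"
    using SA_lv[of c zs] LL_split[of zs c] assms unfolding Lc_lv by simp
  then show ?thesis using S Ls z0in unfolding s_def by blast
qed

lemma ph_Pc:
  fixes F :: "'a::field fls poly"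
  assumes "inco A = inco (lead_coeff F)"
  shows "ph A zs c = smult ((-1) ^ length (filter (\<lambda>z. rord D z < lv D c) zs)) (Pc F D zs (lv D c))"
proof -
  let ?lt = "\<lambda>z. rord D z < lv D c" and ?eq = "\<lambda>z. rord D z = lv D c" and ?gt = "\<lambda>z. lv D c < rord D z"
  have gen: "smult a (\<Prod>z\<leftarrow>zs. lam c z) = smult ((-1) ^ length (filter ?lt zs) * a * (\<Prod>z\<leftarrow>filter ?lt zs. inco z))
       ((\<Prod>z\<leftarrow>filter ?eq zs. [:- inco z, 1:]) * monom 1 (length (filter ?gt zs)))" for a
  proof (induction zs arbitrary: a)
    case Nil then show ?case by (simp add: monom_0 one_pCons)
  next
    case (Cons z zs)
    define R where "R = (\<Prod>z\<leftarrow>zs. lam c z)"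
    define k where "k = length (filter ?lt zs)"
    define P where "P = (\<Prod>z\<leftarrow>filter ?lt zs. inco z)"
    define E where "E = (\<Prod>z\<leftarrow>filter ?eq zs. [:- inco z, 1:])"
    define g where "g = length (filter ?gt zs)"
    have IH: "smult b R = smult ((-1) ^ k * b * P) (E * monom 1 g)" for b
      using Cons unfolding R_def k_def P_def E_def g_def by simp
    have L: "(\<Prod>z\<leftarrow>z # zs. lam c z) = lam c z * R" unfolding R_def by simp
    consider "z \<noteq> 0 \<and> fls_subdegree z < c" | "z \<noteq> 0 \<and> fls_subdegree z = c" | "z = 0 \<or> c < fls_subdegree z"
      by force
    then show ?case
    proof cases
      case 1
      then have lz: "lam c z = [:- inco z:]" unfolding lam_def by simp
      have p: "?lt z" "\<not> ?eq z" "\<not> ?gt z" using 1 by (auto simp: rord_lt_lv rord_eq_lv rord_gt_lv)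
      have "smult a (lam c z * R) = smult (a * (- inco z)) R" unfolding lz by simp
      also have "\<dots> = smult ((-1) ^ Suc k * a * (inco z * P)) (E * monom 1 g)" unfolding IH by (simp add: algebra_simps)
      finally show ?thesis unfolding L using p unfolding k_def P_def E_def g_def by simp
    next
      case 2
      then have lz: "lam c z = [:- inco z, 1:]" unfolding lam_def by simp
      have p: "\<not> ?lt z" "?eq z" "\<not> ?gt z" using 2 by (auto simp: rord_lt_lv rord_eq_lv rord_gt_lv)
      have "smult a (lam c z * R) = lam c z * smult a R" by (metis mult_smult_right)
      also have "\<dots> = smult ((-1) ^ k * a * P) ((lam c z * E) * monom 1 g)"
        unfolding IH by (metis mult_smult_right mult.assoc)
      finally show ?thesis unfolding L using p lz unfolding k_def P_def E_def g_def by simp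
    next
      case 3
      then have lz: "lam c z = [:0, 1:]" unfolding lam_def by auto
      have p: "\<not> ?lt z" "\<not> ?eq z" "?gt z" using 3 by (auto simp: rord_lt_lv rord_eq_lv rord_gt_lv)
      have m: "monom (1::'a) (Suc g) = [:0, 1:] * monom 1 g" by (simp add: monom_Suc)
      have "smult a (lam c z * R) = lam c z * smult a R" by (metis mult_smult_right)
      also have "\<dots> = smult ((-1) ^ k * a * P) (E * ([:0, 1:] * monom 1 g))"
        unfolding IH lz by (metis mult_smult_right mult.left_commute)
      also have "\<dots> = smult ((-1) ^ k * a * P) (E * monom 1 (Suc g))" unfolding m ..
      finally show ?thesis unfolding L using p unfolding k_def P_def E_def g_def by simp
    qed
  qed
  have "ph A zs c = smult (inco A) (\<Prod>z\<leftarrow>zs. lam c z)" unfolding ph_def by simp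
  also have "\<dots> = smult ((-1) ^ length (filter ?lt zs)) (Pc F D zs (lv D c))"
    unfolding gen Pc_def assms by (simp add: algebra_simps)
  finally show ?thesis .
qed

end

lemma related_smult:
  fixes P Q :: "'a::field poly"
  assumes "related P Q" "a \<noteq> 0" "b \<noteq> 0"
  shows "related (smult a P) (smult b Q)"
proof -
  obtain c where c: "c \<noteq> 0" "P ^ degree Q = smult c (Q ^ degree P)" using assms(1) unfolding related_def by auto
  have "smult a P ^ degree (smult b Q) = smult (a ^ degree Q * c / b ^ degree P) (smult b Q ^ degree (smult a P))"
    using c assms(2,3) by (simp add: smult_power)
  moreover have "a ^ degree Q * c / b ^ degree P \<noteq> 0" using assms c by simp
  moreover have "smult a P \<noteq> 0" "smult b Q \<noteq> 0" using assms unfolding related_def by auto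
  ultimately show ?thesis unfolding related_def by blast
qed

lemma related_sym: "related P Q \<Longrightarrow> related Q (P :: 'a::field poly)"
proof -
  assume "related P Q"
  then obtain c where c: "c \<noteq> 0" "P ^ degree Q = smult c (Q ^ degree P)" "P \<noteq> 0" "Q \<noteq> 0"
    unfolding related_def by auto
  then have "Q ^ degree P = smult (1 / c) (P ^ degree Q)" by simp
  moreover have "1 / c \<noteq> 0" using c by simp
  ultimately show "related Q P" using c unfolding related_def by blast
qed

abbreviation sl :: "'a::linorder set \<Rightarrow> 'a list" where "sl S \<equiv> sorted_list_of_set S"

lemma sl_snoc:
  assumes "finite S" "\<forall>x\<in>S. x < s"
  shows "sl (insert s S) = sl S @ [s]"
proof -
  have "sorted_wrt (<) (sl S @ [s])" using assms
    by (simp add: sorted_wrt_append)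
  moreover have "set (sl S @ [s]) = insert s S" using assms by simp
  moreover have "sorted_wrt (<) (sl (insert s S))" by (rule strict_sorted_list_of_set)
  moreover have "set (sl (insert s S)) = insert s S" using assms(1) by (intro set_sorted_list_of_set) simp
  ultimately show ?thesis
    using strict_sorted_equal[of "sl S @ [s]" "sl (insert s S)"] by metis
qed

lemma sl_nth_in: "finite S \<Longrightarrow> i < card S \<Longrightarrow> sl S ! i \<in> S"
  by (metis length_sorted_list_of_set nth_mem set_sorted_list_of_set)

lemma sl_nth_less: "finite S \<Longrightarrow> i < j \<Longrightarrow> j < card S \<Longrightarrow> sl S ! i < sl S ! j"
  by (metis length_sorted_list_of_set sorted_wrt_nth_less strict_sorted_list_of_set)

lemma fin_ro: "finite (root_ords nu zs)" unfolding root_ords_def by simp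

lemma Ord_in: "1 \<le> i \<Longrightarrow> i \<le> iota nu zs \<Longrightarrow> Ord nu zs i \<in> root_ords nu zs"
  unfolding Ord_def iota_def using sl_nth_in[OF fin_ro[of nu zs], of "i - 1"] by simp

lemma Ord_less: "1 \<le> i \<Longrightarrow> i < j \<Longrightarrow> j \<le> iota nu zs \<Longrightarrow> Ord nu zs i < Ord nu zs j"
  unfolding Ord_def iota_def using sl_nth_less[OF fin_ro[of nu zs], of "i - 1" "j - 1"] by simp

lemma assemble_par:
  fixes F G :: "'a::field fls poly"
  assumes same: "root_ords nu zs = root_ords mu ws"
    and K2: "\<forall>x. x \<in> root_ords nu zs \<and> x \<le> t \<longrightarrow> degree G * Lc nu zs x = degree F * Lc mu ws x"
    and K3: "\<forall>x\<in>root_ords nu zs. x < t \<longrightarrow> related (Pc F nu zs x) (Pc G mu ws x)"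
    and top: "\<forall>x\<in>root_ords nu zs. x \<le> t"
    and par0: "ereal (real (degree G)) * O0 F = ereal (real (degree F)) * O0 G"
  shows "unp_par F nu zs G mu ws"
    and "\<forall>i. 1 \<le> i \<and> i < min (iota nu zs) (iota mu ws) \<longrightarrow> related (Ppoly F nu zs i) (Ppoly G mu ws i)"
proof -
  have io: "iota nu zs = iota mu ws" unfolding iota_def same ..
  have Od: "Ord nu zs i = Ord mu ws i" for i unfolding Ord_def same ..
  have "degree G * Li nu zs i = degree F * Li mu ws i" if "1 \<le> i" "i \<le> iota nu zs" for i
  proof -
    have "Ord nu zs i \<in> root_ords nu zs" using that by (rule Ord_in)
    then show ?thesis unfolding Li_def using K2 top Od[of i] by auto
  qed
  then show "unp_par F nu zs G mu ws"
    unfolding unp_par_def unp_par_j_def using io Od par0 by auto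
  show "\<forall>i. 1 \<le> i \<and> i < min (iota nu zs) (iota mu ws) \<longrightarrow> related (Ppoly F nu zs i) (Ppoly G mu ws i)"
  proof (intro allI impI)
    fix i assume i: "1 \<le> i \<and> i < min (iota nu zs) (iota mu ws)"
    have "Ord nu zs i < Ord nu zs (iota nu zs)" using i by (intro Ord_less) auto
    moreover have "Ord nu zs (iota nu zs) \<le> t" using top Ord_in[of "iota nu zs" nu zs] i by auto
    moreover have "Ord nu zs i \<in> root_ords nu zs" using i by (intro Ord_in) auto
    ultimately show "related (Ppoly F nu zs i) (Ppoly G mu ws i)"
      unfolding Ppoly_def using K3 Od by (metis order_less_le_trans)
  qed
qed


lemma card_ro: "iota nu zs = length (sl (root_ords nu zs))"
  unfolding iota_def by simp

lemma assemble_less: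
  fixes F G :: "'a::field fls poly"
  assumes K1: "\<forall>x\<in>root_ords nu zs. x < t \<longrightarrow> x \<in> root_ords mu ws"
      "\<forall>x\<in>root_ords mu ws. x < t \<longrightarrow> x \<in> root_ords nu zs"
    and K2: "\<forall>x. (x \<in> root_ords nu zs \<or> x \<in> root_ords mu ws) \<and> x \<le> t \<longrightarrow> degree G * Lc nu zs x = degree F * Lc mu ws x"
    and K3: "\<forall>x\<in>root_ords nu zs. x < t \<longrightarrow> related (Pc F nu zs x) (Pc G mu ws x)"
    and Btop: "\<forall>x\<in>root_ords mu ws. x \<le> t" and tB: "t \<in> root_ords mu ws"
    and st: "t < s" and Sa: "root_ords nu zs \<inter> {t<..} = {s}" and Ls: "Lc nu zs s = 1"
    and Lt: "t \<notin> root_ords nu zs \<longrightarrow> Lc nu zs t = 1"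
    and par0: "ereal (real (degree G)) * O0 F = ereal (real (degree F)) * O0 G"
  shows "unp_less G mu ws F nu zs"
    and "\<forall>i. 1 \<le> i \<and> i < min (iota nu zs) (iota mu ws) \<longrightarrow> related (Ppoly F nu zs i) (Ppoly G mu ws i)"
    and "Ohat mu ws < Ohat nu zs"
proof -
  let ?A = "root_ords nu zs" and ?B = "root_ords mu ws"
  have fA: "finite ?A" and fB: "finite ?B" by (rule fin_ro)+
  have par0': "ereal (real (degree F)) * O0 G = ereal (real (degree G)) * O0 F" using par0 by simp
  have sA: "s \<in> ?A" using Sa by auto
  have sB: "s \<notin> ?B" using Btop st by force
  have Aup: "x \<in> ?A \<Longrightarrow> t < x \<Longrightarrow> x = s" for x using Sa by auto
  have K2': "x \<in> ?B \<Longrightarrow> degree F * Lc mu ws x = degree G * Lc nu zs x" for x using K2 Btop by auto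
  have iGpos: "iota mu ws \<ge> 1" unfolding iota_def using tB fB by (metis One_nat_def Suc_leI card_gt_0_iff empty_iff)
  have OGle: "Ord mu ws i \<le> t" if "1 \<le> i" "i \<le> iota mu ws" for i using Btop Ord_in[OF that] by auto
  have main: "unp_less G mu ws F nu zs \<and> (\<forall>i. 1 \<le> i \<and> i < min (iota nu zs) (iota mu ws) \<longrightarrow> related (Ppoly F nu zs i) (Ppoly G mu ws i))
     \<and> Ohat mu ws < Ohat nu zs"
  proof (cases "t \<in> ?A")
    case True
    have AB: "?A = insert s ?B"
    proof (intro set_eqI iffI)
      fix x assume x: "x \<in> ?A"
      show "x \<in> insert s ?B"
      proof (cases "x < t")
        case True then show ?thesis using K1 x by auto
      next
        case False
        then show ?thesis using x Aup tB by (metis insertI1 insertI2 linorder_neqE order_less_imp_not_less)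
      qed
    next
      fix x assume "x \<in> insert s ?B"
      then show "x \<in> ?A" using sA K1 Btop True by (metis insertE order_le_less)
    qed
    have slA: "sl ?A = sl ?B @ [s]" unfolding AB using fB Btop st by (intro sl_snoc) force+
    have io: "iota nu zs = iota mu ws + 1" unfolding card_ro slA by simp
    have Oeq: "Ord nu zs i = Ord mu ws i" if "1 \<le> i" "i \<le> iota mu ws" for i
    proof -
      have "i - 1 < length (sl ?B)" using that unfolding card_ro by linarith
      then show ?thesis unfolding Ord_def slA by (simp add: nth_append)
    qed
    have OhF: "Ohat nu zs = s" unfolding Ohat_def Ord_def slA io by (simp add: nth_append card_ro)
    have OhG: "Ohat mu ws < s" unfolding Ohat_def using OGle[of "iota mu ws"] iGpos st by simp
    have LhF: "Lhat nu zs = 1" unfolding Lhat_def Li_def using OhF Ls unfolding Ohat_def by simp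
    have "degree F * Li mu ws i = degree G * Li nu zs i" if "1 \<le> i" "i \<le> iota mu ws" for i
      unfolding Li_def using K2'[OF Ord_in[OF that]] Oeq[OF that] by simp
    then have pj: "unp_par_j G mu ws F nu zs (iota mu ws)"
      unfolding unp_par_j_def using io par0' Oeq by auto
    have rel: "\<forall>i. 1 \<le> i \<and> i < min (iota nu zs) (iota mu ws) \<longrightarrow> related (Ppoly F nu zs i) (Ppoly G mu ws i)"
    proof (intro allI impI)
      fix i assume i: "1 \<le> i \<and> i < min (iota nu zs) (iota mu ws)"
      have "Ord mu ws i < Ord mu ws (iota mu ws)" using i by (intro Ord_less) auto
      then have lt: "Ord nu zs i < t" using OGle[of "iota mu ws"] iGpos Oeq[of i] i by auto
      have "Ord nu zs i \<in> ?A" using i by (intro Ord_in) auto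
      then show "related (Ppoly F nu zs i) (Ppoly G mu ws i)"
        unfolding Ppoly_def using K3 lt Oeq[of i] i by auto
    qed
    show ?thesis unfolding unp_less_def using OhF OhG LhF io pj rel by auto
  next
    case False
    define S' where "S' = ?B - {t}"
    have fS: "finite S'" unfolding S'_def using fB by simp
    have S'lt: "\<forall>x\<in>S'. x < t" unfolding S'_def using Btop by force
    have Beq: "?B = insert t S'" unfolding S'_def using tB by auto
    have AB: "?A = insert s S'"
    proof (intro set_eqI iffI)
      fix x assume x: "x \<in> ?A"
      show "x \<in> insert s S'"
      proof (cases "x < t")
        case True then show ?thesis using K1 x unfolding S'_def by auto
      next
        case nf: False
        then have "x \<noteq> t" using x False by auto
        then show ?thesis using x Aup nf by (metis insertI1 linorder_neqE order_less_imp_not_less)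
      qed
    next
      fix x assume "x \<in> insert s S'"
      then show "x \<in> ?A" using sA K1 S'lt unfolding S'_def by auto
    qed
    have slA: "sl ?A = sl S' @ [s]" unfolding AB using fS S'lt st by (intro sl_snoc) force+
    have slB: "sl ?B = sl S' @ [t]" unfolding Beq using fS S'lt by (intro sl_snoc) auto
    have io: "iota nu zs = iota mu ws" unfolding card_ro slA slB by simp
    have io': "iota mu ws = length (sl S') + 1" unfolding card_ro slB by simp
    have Oeq: "Ord nu zs i = Ord mu ws i" if "1 \<le> i" "i < iota mu ws" for i
    proof -
      have "i - 1 < length (sl S')" using that io' by linarith
      then show ?thesis unfolding Ord_def slA slB by (simp add: nth_append)
    qed
    have OhF: "Ohat nu zs = s" unfolding Ohat_def Ord_def slA io io' by (simp add: nth_append)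
    have OhG: "Ohat mu ws = t" unfolding Ohat_def Ord_def slB io' by (simp add: nth_append)
    have LhF: "Lhat nu zs = 1" unfolding Lhat_def Li_def using OhF Ls unfolding Ohat_def by simp
    have LhG: "degree F * Lhat mu ws = degree G * Lhat nu zs"
      unfolding LhF unfolding Lhat_def Li_def using OhG K2'[OF tB] Lt False unfolding Ohat_def by simp
    have "degree F * Li mu ws i = degree G * Li nu zs i" if "1 \<le> i" "i \<le> iota mu ws - 1" for i
    proof -
      have a: "i \<le> iota mu ws" "i < iota mu ws" using that io' by auto
      show ?thesis unfolding Li_def using K2'[OF Ord_in[OF that(1) a(1)]] Oeq[OF that(1) a(2)] by simp
    qed
    then have pj: "unp_par_j G mu ws F nu zs (iota mu ws - 1)"
      unfolding unp_par_j_def using io par0' Oeq io' by auto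
    have rel: "\<forall>i. 1 \<le> i \<and> i < min (iota nu zs) (iota mu ws) \<longrightarrow> related (Ppoly F nu zs i) (Ppoly G mu ws i)"
    proof (intro allI impI)
      fix i assume i: "1 \<le> i \<and> i < min (iota nu zs) (iota mu ws)"
      have "Ord mu ws i < Ord mu ws (iota mu ws)" using i by (intro Ord_less) auto
      then have lt: "Ord nu zs i < t" using OhG Oeq[of i] i unfolding Ohat_def by auto
      have "Ord nu zs i \<in> ?A" using i by (intro Ord_in) auto
      then show "related (Ppoly F nu zs i) (Ppoly G mu ws i)"
        unfolding Ppoly_def using K3 lt Oeq[of i] i by auto
    qed
    show ?thesis unfolding unp_less_def using OhF OhG LhF LhG io pj rel st by auto
  qed
  then show "unp_less G mu ws F nu zs"
    and "\<forall>i. 1 \<le> i \<and> i < min (iota nu zs) (iota mu ws) \<longrightarrow> related (Ppoly F nu zs i) (Ppoly G mu ws i)"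
    and "Ohat mu ws < Ohat nu zs" by blast+
qed

unbundle fps_syntax

lemma cp_hom:
  assumes "d > 0"
  shows "cp d (0::'a::idom fls) = 0" "cp d (1::'a fls) = 1" "\<And>x y. cp d (x + y) = cp d x + cp d (y::'a fls)"
    "\<And>x y. cp d (x * y) = cp d x * cp d (y::'a fls)"
  using assms by simp_all

lemma map_cp_smult: "map_poly (cp d) (smult a p) = smult (cp d a) (map_poly (cp d) (p :: 'a::idom fls poly))"
  by (rule map_poly_smult) simp_all

lemma prod_map_lin: "(\<Prod>z\<leftarrow>map f zs. [:-z, 1:]) = (\<Prod>z\<leftarrow>zs. [:- f z, 1:])"
  by (induction zs) auto

lemma rootfact_common:
  fixes F :: "'a::field fls poly"
  assumes r: "root_factorization F nu zs" and mu: "mu > 0"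
  shows "map_poly (cp (nu * mu)) F = smult (cp (nu * mu) (lead_coeff F)) (\<Prod>z\<leftarrow>map (cp mu) zs. [:-z, 1:])"
proof -
  have nu: "nu > 0" using r unfolding root_factorization_def by simp
  have r': "map_poly (cp nu) F = smult (cp nu (lead_coeff F)) (\<Prod>z\<leftarrow>zs. [:-z, 1:])"
    using r unfolding root_factorization_def by simp
  have "map_poly (cp (nu * mu)) F = map_poly (cp mu) (map_poly (cp nu) F)"
    by (subst map_poly_map_poly) (simp_all add: comp_def cp_cp nu mu)
  also have "\<dots> = smult (cp mu (cp nu (lead_coeff F))) (map_poly (cp mu) (\<Prod>z\<leftarrow>zs. [:-z, 1:]))"
    unfolding r' map_cp_smult ..
  also have "map_poly (cp mu) (\<Prod>z\<leftarrow>zs. [:-z, 1:]) = (\<Prod>z\<leftarrow>zs. [:- cp mu z, 1:])"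
    by (rule map_poly_prod_h) (use mu in simp_all)
  finally have X: "map_poly (cp (nu * mu)) F = smult (cp mu (cp nu (lead_coeff F))) (\<Prod>z\<leftarrow>zs. [:- cp mu z, 1:])" .
  show ?thesis unfolding prod_map_lin X by (simp add: cp_cp nu mu)
qed

lemma degree_prod_lin: "degree (\<Prod>z\<leftarrow>zs. [:-z, 1:]) = length (zs :: 'a::idom list)"
proof (induction zs)
  case (Cons a zs)
  have "(\<Prod>z\<leftarrow>zs. [:-z, 1:]) \<noteq> 0" by (auto simp: prod_list_zero_iff)
  then have "degree ([:-a, 1:] * (\<Prod>z\<leftarrow>zs. [:-z, 1:])) = degree [:-a, 1::'a:] + degree (\<Prod>z\<leftarrow>zs. [:-z, 1:])"
    by (intro degree_mult_eq) simp_all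
  then show ?case using Cons by simp
qed simp

lemma degree_cp: "d > 0 \<Longrightarrow> degree (map_poly (cp d) F) = degree F"
  by (rule degree_map_poly) (simp add: cp_eq0)

lemma jac_cp:
  fixes F G :: "'a::field_char_0 fls poly"
  assumes d: "d > 0"
  shows "jac (map_poly (cp d) F) (map_poly (cp d) G) =
    smult (fls_shift (- (int d - 1)) (fls_const (of_nat d))) (map_poly (cp d) (jac F G))"
proof -
  define K :: "'a fls" where "K = fls_shift (- (int d - 1)) (fls_const (of_nat d))"
  have h: "cp d 0 = (0::'a fls)" "cp d 1 = (1::'a fls)" "\<And>x y. cp d (x + y) = cp d x + cp d (y::'a fls)"
    "\<And>x y. cp d (x * y) = cp d x * cp d (y::'a fls)" using cp_hom[OF d] by auto
  have dx: "map_poly fls_deriv (map_poly (cp d) H) = smult K (map_poly (cp d) (map_poly fls_deriv H))" for H :: "'a fls poly"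
    by (intro poly_eqI) (simp add: coeff_map_poly fls_deriv_cp[OF d] K_def)
  have dy: "pderiv (map_poly (cp d) H) = map_poly (cp d) (pderiv H)" for H :: "'a fls poly"
    using map_poly_pderiv_h[of "cp d", OF h] by simp
  show ?thesis
    unfolding jac_def dx dy K_def[symmetric]
    by (simp add: map_poly_mult_h[of "cp d", OF h] map_poly_diff_h[of "cp d", OF h] smult_diff_right)
qed

lemma coeff0_prod: "coeff (\<Prod>z\<leftarrow>zs. [:-z, 1:]) 0 = (\<Prod>z\<leftarrow>zs. - z)"
  by (induction zs) (simp_all add: coeff_mult_0)

lemma subdeg_prod:
  fixes A :: "'a::field fls"
  assumes "A * (\<Prod>z\<leftarrow>zs. - z) \<noteq> 0"
  shows "(\<forall>z\<in>set zs. z \<noteq> 0) \<and> fls_subdegree (A * (\<Prod>z\<leftarrow>zs. - z)) = fls_subdegree A + (\<Sum>z\<leftarrow>zs. fls_subdegree z)"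
  using assms
proof (induction zs arbitrary: A)
  case Nil then show ?case by simp
next
  case (Cons a zs)
  have e: "A * (\<Prod>z\<leftarrow>a # zs. - z) = (A * - a) * (\<Prod>z\<leftarrow>zs. - z)" by (simp add: algebra_simps)
  have "A * - a * (\<Prod>z\<leftarrow>zs. - z) \<noteq> 0" using Cons(2) e by simp
  then have IH: "(\<forall>z\<in>set zs. z \<noteq> 0) \<and> fls_subdegree (A * - a * (\<Prod>z\<leftarrow>zs. - z)) = fls_subdegree (A * - a) + (\<Sum>z\<leftarrow>zs. fls_subdegree z)"
    using Cons(1) by blast
  have a: "a \<noteq> 0" "A \<noteq> 0" using Cons(2) by auto
  then have "fls_subdegree (A * - a) = fls_subdegree A + fls_subdegree a" by (simp add: fls_uminus_subdegree)
  have "fls_subdegree (A * (\<Prod>z\<leftarrow>a # zs. - z)) = fls_subdegree (A * - a * (\<Prod>z\<leftarrow>zs. - z))"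
    unfolding e ..
  also have "\<dots> = fls_subdegree A + fls_subdegree a + (\<Sum>z\<leftarrow>zs. fls_subdegree z)"
    using IH \<open>fls_subdegree (A * - a) = fls_subdegree A + fls_subdegree a\<close> by simp
  finally show ?case using IH a by (simp add: add.assoc)
qed

unbundle fps_syntax

lemma len_filter_pos: "length (filter P xs) > 0 \<longleftrightarrow> (\<exists>x\<in>set xs. P x)"
  by (induction xs) auto

lemma cnt_eq_order:
  fixes A :: "'a::field fls"
  assumes "A \<noteq> 0"
  shows "cnt_eq zs c > 0 \<longleftrightarrow> (\<exists>r. r \<noteq> 0 \<and> order r (ph A zs c) > 0)"
proof
  assume "cnt_eq zs c > 0"
  then obtain z where z: "z \<in> set zs" "z \<noteq> 0" "fls_subdegree z = c"
    unfolding cnt_eq_def len_filter_pos by blast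
  then have "cnt_eqr zs c (inco z) > 0" unfolding cnt_eqr_def len_filter_pos by blast
  then show "\<exists>r. r \<noteq> 0 \<and> order r (ph A zs c) > 0"
    using inco_nz[OF z(2)] order_ph[OF assms, of "inco z" zs c] by (intro exI[of _ "inco z"]) auto
next
  assume "\<exists>r. r \<noteq> 0 \<and> order r (ph A zs c) > 0"
  then obtain r where r: "r \<noteq> 0" "cnt_eqr zs c r > 0" using order_ph[OF assms] by fastforce
  then show "cnt_eq zs c > 0" unfolding cnt_eqr_def cnt_eq_def len_filter_pos by blast
qed

lemma Kfacts:
  fixes F G :: "'a::field_char_0 fls poly"
  assumes D: "D > 0" and AB: "A \<noteq> 0" "B \<noteq> 0"
    and iA: "inco A = inco (lead_coeff F)" and iB: "inco B = inco (lead_coeff G)"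
    and N: "degree F = length zs" "length zs > 0" and M: "degree G = length ws" "length ws > 0"
    and alg: "\<forall>p :: 'a poly. degree p > 0 \<longrightarrow> (\<exists>x. poly p x = 0)"
    and C0: "\<forall>z\<in>set zs. z \<noteq> 0 \<longrightarrow> cl \<le> fls_subdegree z" "\<forall>w\<in>set ws. w \<noteq> 0 \<longrightarrow> cl \<le> fls_subdegree w"
    and C1: "\<forall>c. cl \<le> c \<and> c < cs \<longrightarrow> (\<forall>r. length zs * order r (ph B ws c) = length ws * order r (ph A zs c))"
    and C2: "\<forall>c \<le> cs. length ws * LL zs c = length zs * LL ws c"
  shows "\<forall>x\<in>root_ords D zs. x < lv D cs \<longrightarrow> x \<in> root_ords D ws"
    and "\<forall>x\<in>root_ords D ws. x < lv D cs \<longrightarrow> x \<in> root_ords D zs"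
    and "\<forall>x. (x \<in> root_ords D zs \<or> x \<in> root_ords D ws) \<and> x \<le> lv D cs \<longrightarrow> degree G * Lc D zs x = degree F * Lc D ws x"
    and "\<forall>x\<in>root_ords D zs. x < lv D cs \<longrightarrow> related (Pc F D zs x) (Pc G D ws x)"
proof -
  have lev: "lv D c \<in> root_ords D zs \<longleftrightarrow> lv D c \<in> root_ords D ws" if c: "cl \<le> c" "c < cs" for c
  proof -
    have o: "order r (ph A zs c) > 0 \<longleftrightarrow> order r (ph B ws c) > 0" for r
    proof -
      have e: "length zs * order r (ph B ws c) = length ws * order r (ph A zs c)" using C1 c by blast
      show ?thesis
      proof (cases "order r (ph A zs c) = 0")
        case True then show ?thesis using e N(2) by simp
      next
        case False then show ?thesis using e M(2) by (metis gr0I mult_is_0 less_not_refl3)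
      qed
    qed
    show ?thesis unfolding SA_lv[OF D] cnt_eq_order[OF AB(1), of zs c] cnt_eq_order[OF AB(2), of ws c] o ..
  qed
  have fin: "x \<in> root_ords D xs \<Longrightarrow> x < lv D cs \<Longrightarrow> \<exists>c. x = lv D c \<and> c < cs \<and> (\<exists>z\<in>set xs. z \<noteq> 0 \<and> fls_subdegree z = c)"
    for x xs
  proof -
    assume x: "x \<in> root_ords D xs" "x < lv D cs"
    have "x \<noteq> \<infinity>" using x(2) by auto
    then obtain z where z: "z \<in> set xs" "z \<noteq> 0" "x = lv D (fls_subdegree z)" using SA_elem[OF D x(1)] by blast
    then have "fls_subdegree z < cs" using x(2) lv_less[OF D] by simp
    then show ?thesis using z by blast
  qed
  show K1a: "\<forall>x\<in>root_ords D zs. x < lv D cs \<longrightarrow> x \<in> root_ords D ws"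
  proof (intro ballI impI)
    fix x assume x: "x \<in> root_ords D zs" "x < lv D cs"
    then obtain c where c: "x = lv D c" "c < cs" "\<exists>z\<in>set zs. z \<noteq> 0 \<and> fls_subdegree z = c" using fin by blast
    then have "cl \<le> c" using C0 by auto
    then show "x \<in> root_ords D ws" using lev c x by auto
  qed
  show K1b: "\<forall>x\<in>root_ords D ws. x < lv D cs \<longrightarrow> x \<in> root_ords D zs"
  proof (intro ballI impI)
    fix x assume x: "x \<in> root_ords D ws" "x < lv D cs"
    then obtain c where c: "x = lv D c" "c < cs" "\<exists>z\<in>set ws. z \<noteq> 0 \<and> fls_subdegree z = c" using fin by blast
    then have "cl \<le> c" using C0 by auto
    then show "x \<in> root_ords D zs" using lev c x by auto
  qed
  have fin2: "x \<in> root_ords D xs \<Longrightarrow> x \<le> lv D cs \<Longrightarrow> \<exists>c. x = lv D c \<and> c \<le> cs" for x xs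
  proof -
    assume x: "x \<in> root_ords D xs" "x \<le> lv D cs"
    have "x \<noteq> \<infinity>" using x(2) lv_fin[OF D, of cs] by auto
    then obtain z where z: "z \<in> set xs" "z \<noteq> 0" "x = lv D (fls_subdegree z)" using SA_elem[OF D x(1)] by blast
    then have "fls_subdegree z \<le> cs" using x(2) lv_le[OF D] by simp
    then show ?thesis using z by blast
  qed
  show "\<forall>x. (x \<in> root_ords D zs \<or> x \<in> root_ords D ws) \<and> x \<le> lv D cs \<longrightarrow> degree G * Lc D zs x = degree F * Lc D ws x"
  proof (intro allI impI)
    fix x assume x: "(x \<in> root_ords D zs \<or> x \<in> root_ords D ws) \<and> x \<le> lv D cs"
    then obtain c where "x = lv D c" "c \<le> cs" using fin2 by blast
    then show "degree G * Lc D zs x = degree F * Lc D ws x" using C2 N M by (simp add: Lc_lv[OF D])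
  qed
  show "\<forall>x\<in>root_ords D zs. x < lv D cs \<longrightarrow> related (Pc F D zs x) (Pc G D ws x)"
  proof (intro ballI impI)
    fix x assume x: "x \<in> root_ords D zs" "x < lv D cs"
    then obtain c where c: "x = lv D c" "c < cs" "\<exists>z\<in>set zs. z \<noteq> 0 \<and> fls_subdegree z = c" using fin by blast
    then have cl: "cl \<le> c" using C0 by auto
    have o: "length zs * order r (ph B ws c) = length ws * order r (ph A zs c)" for r using C1 cl c by auto
    have L: "length ws * LL zs c = length zs * LL ws c" using C2 c by auto
    have "LL ws c * order r (ph A zs c) = LL zs c * order r (ph B ws c)" for r
    proof -
      have "length zs * (LL ws c * order r (ph A zs c)) = length zs * (LL zs c * order r (ph B ws c))"
        using o[of r] L by (metis mult.assoc mult.commute)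
      then show ?thesis using N(2) by simp
    qed
    then have rel: "related (ph A zs c) (ph B ws c)"
      using related_from_orders[OF alg ph_nz[OF AB(1)] ph_nz[OF AB(2)]]
      unfolding degree_ph[OF AB(1)] degree_ph[OF AB(2)] by blast
    define k1 where "k1 = length (filter (\<lambda>z. rord D z < lv D c) zs)"
    define k2 where "k2 = length (filter (\<lambda>z. rord D z < lv D c) ws)"
    have "Pc F D zs (lv D c) = smult ((-1) ^ k1) (ph A zs c)"
      unfolding ph_Pc[OF D iA, of zs c] k1_def by simp
    moreover have "Pc G D ws (lv D c) = smult ((-1) ^ k2) (ph B ws c)"
      unfolding ph_Pc[OF D iB, of ws c] k2_def by simp
    ultimately show "related (Pc F D zs x) (Pc G D ws x)"
      using related_smult[OF rel] c by simp
  qed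
qed

unbundle fps_syntax

lemma int_info:
  fixes F :: "'a::field fls poly"
  assumes D: "D > 0" and rF: "map_poly (cp D) F = smult (cp D (lead_coeff F)) (\<Prod>z\<leftarrow>zs. [:-z, 1:])"
    and L: "lead_coeff F \<noteq> 0"
  shows "coeff F 0 \<noteq> 0 \<longleftrightarrow> (\<forall>z\<in>set zs. z \<noteq> 0)"
    and "coeff F 0 \<noteq> 0 \<Longrightarrow> fls_subdegree (cp D (lead_coeff F)) + (\<Sum>z\<leftarrow>zs. fls_subdegree z) = int D * fls_subdegree (coeff F 0)"
proof -
  have X: "cp D (coeff F 0) = cp D (lead_coeff F) * (\<Prod>z\<leftarrow>zs. - z)"
    using arg_cong[OF rF, of "\<lambda>p. coeff p 0"] by (simp add: coeff_map_poly coeff0_prod)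
  have A: "cp D (lead_coeff F) \<noteq> 0" using L D by (simp add: cp_eq0)
  have P: "(\<Prod>z\<leftarrow>zs. - z) \<noteq> 0 \<longleftrightarrow> (\<forall>z\<in>set zs. z \<noteq> 0)"
    by (induction zs) auto
  show "coeff F 0 \<noteq> 0 \<longleftrightarrow> (\<forall>z\<in>set zs. z \<noteq> 0)"
    using X A P D by (metis cp_eq0 mult_eq_0_iff)
  assume c: "coeff F 0 \<noteq> 0"
  then have "cp D (lead_coeff F) * (\<Prod>z\<leftarrow>zs. - z) \<noteq> 0" using X D by (metis cp_eq0)
  from subdeg_prod[OF this] have "fls_subdegree (cp D (lead_coeff F) * (\<Prod>z\<leftarrow>zs. - z)) =
     fls_subdegree (cp D (lead_coeff F)) + (\<Sum>z\<leftarrow>zs. fls_subdegree z)" by blast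
  then show "fls_subdegree (cp D (lead_coeff F)) + (\<Sum>z\<leftarrow>zs. fls_subdegree z) = int D * fls_subdegree (coeff F 0)"
    using X cp_subdegree[OF D c] by simp
qed

lemma O0_eq: "F \<noteq> 0 \<Longrightarrow> O0 F = ereal (of_int (fls_subdegree (lead_coeff F)))"
  unfolding O0_def ordX_def by simp

lemma main_common:
  fixes F G :: "'k::field_char_0 fls poly" and D :: nat and zs ws :: "'k fls list"
  assumes alg_closed: "\<forall>p :: 'k poly. degree p > 0 \<longrightarrow> (\<exists>x. poly p x = 0)"
    and degF: "degree F > 0" and degG: "degree G > 0"
    and jac: "degree (jac F G) = 0" and D: "D > 0"
    and rF: "map_poly (cp D) F = smult (cp D (lead_coeff F)) (\<Prod>z\<leftarrow>zs. [:-z, 1:])"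
    and rG: "map_poly (cp D) G = smult (cp D (lead_coeff G)) (\<Prod>z\<leftarrow>ws. [:-z, 1:])"
    and par0: "ereal (real (degree G)) * O0 F = ereal (real (degree F)) * O0 G"
    and int_neg: "intY F < 0 \<or> intY G < 0"
  shows "unp_rel F D zs G D ws
     \<and> (\<forall>i. 1 \<le> i \<and> i < min (iota D zs) (iota D ws) \<longrightarrow>
            related (Ppoly F D zs i) (Ppoly G D ws i))
     \<and> (Ohat D zs = Ohat D ws \<longrightarrow>
          unp_par F D zs G D ws
          \<and> ereal (real (degree G)) * intY F = ereal (real (degree F)) * intY G
          \<and> degree G * Lhat D zs = degree F * Lhat D ws)"
proof -
  define A where "A = cp D (lead_coeff F)"
  define B where "B = cp D (lead_coeff G)"
  have F0: "F \<noteq> 0" "lead_coeff F \<noteq> 0" using degF by auto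
  have G0: "G \<noteq> 0" "lead_coeff G \<noteq> 0" using degG by auto
  have AB: "A \<noteq> 0" "B \<noteq> 0" unfolding A_def B_def using F0 G0 D by (simp_all add: cp_eq0)
  have iA: "inco A = inco (lead_coeff F)" unfolding A_def using D by (rule cp_inco)
  have iB: "inco B = inco (lead_coeff G)" unfolding B_def using D by (rule cp_inco)
  have prod_nz: "(\<Prod>z\<leftarrow>xs. [:-z, 1:]) \<noteq> (0 :: 'k fls poly)" for xs by (auto simp: prod_list_zero_iff)
  have N: "degree F = length zs"
    using arg_cong[OF rF, of degree] AB(1) unfolding A_def degree_cp[OF D] by (simp add: degree_prod_lin)
  have M: "degree G = length ws"
    using arg_cong[OF rG, of degree] AB(2) unfolding B_def degree_cp[OF D] by (simp add: degree_prod_lin)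
  have ne: "zs \<noteq> []" "ws \<noteq> []" using N M degF degG by auto
  have J': "degree (jac (smult A (\<Prod>z\<leftarrow>zs. [:-z,1:])) (smult B (\<Prod>w\<leftarrow>ws. [:-w,1:]))) = 0"
  proof -
    have "degree (jac (map_poly (cp D) F) (map_poly (cp D) G)) \<le> degree (map_poly (cp D) (jac F G))"
      unfolding jac_cp[OF D] by (rule degree_smult_le)
    then show ?thesis unfolding rF rG A_def[symmetric] B_def[symmetric] degree_cp[OF D] jac by simp
  qed
  have par: "int (length ws) * fls_subdegree A = int (length zs) * fls_subdegree B"
  proof -
    have "ereal (real (degree G) * of_int (fls_subdegree (lead_coeff F))) =
          ereal (real (degree F) * of_int (fls_subdegree (lead_coeff G)))"
      using par0 unfolding O0_eq[OF F0(1)] O0_eq[OF G0(1)] by simp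
    then have "real_of_int (int (degree G) * fls_subdegree (lead_coeff F)) = real_of_int (int (degree F) * fls_subdegree (lead_coeff G))"
      by simp
    then have "int (degree G) * fls_subdegree (lead_coeff F) = int (degree F) * fls_subdegree (lead_coeff G)"
      by (simp only: of_int_eq_iff)
    then have e: "int (length ws) * fls_subdegree (lead_coeff F) = int (length zs) * fls_subdegree (lead_coeff G)"
      unfolding N M .
    show ?thesis unfolding A_def B_def cp_subdegree[OF D F0(2)] cp_subdegree[OF D G0(2)]
      using arg_cong[OF e, of "\<lambda>x. int D * x"] by (simp add: ac_simps)
  qed
  have negF: "intY F < 0 \<Longrightarrow> (\<forall>z\<in>set zs. z \<noteq> 0) \<and> fls_subdegree A + (\<Sum>z\<leftarrow>zs. fls_subdegree z) < 0"
  proof -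
    assume "intY F < 0"
    then have c: "coeff F 0 \<noteq> 0" "fls_subdegree (coeff F 0) < 0" unfolding intY_def ordX_def by (auto split: if_splits)
    show ?thesis using int_info[OF D rF F0(2)] c D unfolding A_def by (simp add: mult_pos_neg)
  qed
  have negG: "intY G < 0 \<Longrightarrow> (\<forall>z\<in>set ws. z \<noteq> 0) \<and> fls_subdegree B + (\<Sum>z\<leftarrow>ws. fls_subdegree z) < 0"
  proof -
    assume "intY G < 0"
    then have c: "coeff G 0 \<noteq> 0" "fls_subdegree (coeff G 0) < 0" unfolding intY_def ordX_def by (auto split: if_splits)
    show ?thesis using int_info[OF D rG G0(2)] c D unfolding B_def by (simp add: mult_pos_neg)
  qed
  have neg: "((\<forall>z\<in>set zs. z \<noteq> 0) \<and> fls_subdegree A + (\<Sum>z\<leftarrow>zs. fls_subdegree z) < 0) \<or>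
              ((\<forall>w\<in>set ws. w \<noteq> 0) \<and> fls_subdegree B + (\<Sum>w\<leftarrow>ws. fls_subdegree w) < 0)"
    using int_neg negF negG by blast
  obtain cl cs where C0: "\<forall>z\<in>set zs. z \<noteq> 0 \<longrightarrow> cl \<le> fls_subdegree z" "\<forall>w\<in>set ws. w \<noteq> 0 \<longrightarrow> cl \<le> fls_subdegree w"
    and C1: "\<forall>c. cl \<le> c \<and> c < cs \<longrightarrow> (\<forall>r. length zs * order r (ph B ws c) = length ws * order r (ph A zs c))"
    and C2: "\<forall>c \<le> cs. length ws * LL zs c = length zs * LL ws c"
    and C3: "(cnt_gt zs cs = 0 \<and> cnt_gt ws cs = 0 \<and> cnt_eq zs cs > 0 \<and> cnt_eq ws cs > 0 \<and>
        int (length ws) * (fls_subdegree A + (\<Sum>z\<leftarrow>zs. fls_subdegree z)) =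
        int (length zs) * (fls_subdegree B + (\<Sum>w\<leftarrow>ws. fls_subdegree w)))
     \<or> (cnt_gt ws cs = 0 \<and> cnt_eq ws cs > 0 \<and> cnt_gt zs cs = 1)
     \<or> (cnt_gt zs cs = 0 \<and> cnt_eq zs cs > 0 \<and> cnt_gt ws cs = 1)"
    using core[OF AB ne J' par neg] by blast
  note K = Kfacts[OF D AB iA iB N ne(1)[folded length_greater_0_conv] M ne(2)[folded length_greater_0_conv] alg_closed C0 C1 C2]
  define t where "t = lv D cs"
  have K1a: "\<forall>x\<in>root_ords D zs. x < t \<longrightarrow> x \<in> root_ords D ws" using K(1) unfolding t_def .
  have K1b: "\<forall>x\<in>root_ords D ws. x < t \<longrightarrow> x \<in> root_ords D zs" using K(2) unfolding t_def .
  have K2: "\<forall>x. (x \<in> root_ords D zs \<or> x \<in> root_ords D ws) \<and> x \<le> t \<longrightarrow> degree G * Lc D zs x = degree F * Lc D ws x"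
    using K(3) unfolding t_def .
  have K3: "\<forall>x\<in>root_ords D zs. x < t \<longrightarrow> related (Pc F D zs x) (Pc G D ws x)" using K(4) unfolding t_def .
  show ?thesis
  proof -
    consider (i) "cnt_gt zs cs = 0 \<and> cnt_gt ws cs = 0 \<and> cnt_eq zs cs > 0 \<and> cnt_eq ws cs > 0 \<and>
        int (length ws) * (fls_subdegree A + (\<Sum>z\<leftarrow>zs. fls_subdegree z)) =
        int (length zs) * (fls_subdegree B + (\<Sum>w\<leftarrow>ws. fls_subdegree w))"
      | (ii) "cnt_gt ws cs = 0 \<and> cnt_eq ws cs > 0 \<and> cnt_gt zs cs = 1"
      | (iii) "cnt_gt zs cs = 0 \<and> cnt_eq zs cs > 0 \<and> cnt_gt ws cs = 1"
      using C3 by blast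
    then show ?thesis
    proof cases
      case i
      have topA: "\<forall>x\<in>root_ords D zs. x \<le> t" using i gt0[OF D] unfolding t_def by blast
      have topB: "\<forall>x\<in>root_ords D ws. x \<le> t" using i gt0[OF D] unfolding t_def by blast
      have tA: "t \<in> root_ords D zs" using i SA_lv[OF D] unfolding t_def by blast
      have tB: "t \<in> root_ords D ws" using i SA_lv[OF D] unfolding t_def by blast
      have same: "root_ords D zs = root_ords D ws"
      proof (intro set_eqI iffI)
        fix x assume x: "x \<in> root_ords D zs"
        show "x \<in> root_ords D ws"
        proof (cases "x < t")
          case True then show ?thesis using K1a x by blast
        next
          case False
          have "x \<le> t" using topA x by blast
          then have "x = t" using False by (simp add: order_le_less)
          then show ?thesis using tB by simp
        qed
      next
        fix x assume x: "x \<in> root_ords D ws"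
        show "x \<in> root_ords D zs"
        proof (cases "x < t")
          case True then show ?thesis using K1b x by blast
        next
          case False
          have "x \<le> t" using topB x by blast
          then have "x = t" using False by (simp add: order_le_less)
          then show ?thesis using tA by simp
        qed
      qed
      have K2': "\<forall>x. x \<in> root_ords D zs \<and> x \<le> t \<longrightarrow> degree G * Lc D zs x = degree F * Lc D ws x"
        using K2 by blast
      note asm = assemble_par[OF same K2' K3 topA par0]
      have allz: "\<forall>z\<in>set zs. z \<noteq> 0" using i unfolding cnt_gt_def by (auto simp: filter_empty_conv)
      have allw: "\<forall>z\<in>set ws. z \<noteq> 0" using i unfolding cnt_gt_def by (auto simp: filter_empty_conv)
      have cF: "coeff F 0 \<noteq> 0" using int_info(1)[OF D rF F0(2)] allz by blast
      have cG: "coeff G 0 \<noteq> 0" using int_info(1)[OF D rG G0(2)] allw by blast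
      have "int (length ws) * (int D * fls_subdegree (coeff F 0)) = int (length zs) * (int D * fls_subdegree (coeff G 0))"
        using i int_info(2)[OF D rF F0(2) cF] int_info(2)[OF D rG G0(2) cG] unfolding A_def B_def by simp
      then have "int (length ws) * fls_subdegree (coeff F 0) = int (length zs) * fls_subdegree (coeff G 0)"
        using D by (simp add: algebra_simps)
      then have r: "real (length ws) * real_of_int (fls_subdegree (coeff F 0)) = real (length zs) * real_of_int (fls_subdegree (coeff G 0))"
        using arg_cong[of _ _ real_of_int] by fastforce
      have intr: "ereal (real (degree G)) * intY F = ereal (real (degree F)) * intY G"
        unfolding intY_def ordX_def N M using cF cG r by simp
      have io1: "1 \<le> iota D zs" unfolding iota_def using tA fin_ro by (metis One_nat_def Suc_leI card_gt_0_iff empty_iff)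
      have Lh: "degree G * Lhat D zs = degree F * Lhat D ws"
        using asm(1) io1 unfolding unp_par_def unp_par_j_def Lhat_def by auto
      show ?thesis using asm intr Lh unfolding unp_rel_def by blast
    next
      case ii
      obtain s where s: "s > t" "root_ords D zs \<inter> {t<..} = {s}" "Lc D zs s = 1"
        "t \<notin> root_ords D zs \<longrightarrow> Lc D zs t = 1" using gt1[OF D] ii unfolding t_def by blast
      have topB: "\<forall>x\<in>root_ords D ws. x \<le> t" using ii gt0[OF D] unfolding t_def by blast
      have tB: "t \<in> root_ords D ws" using ii SA_lv[OF D] unfolding t_def by blast
      note asm = assemble_less[OF K1a K1b K2 K3 topB tB s par0]
      show ?thesis using asm unfolding unp_rel_def by auto
    next
      case iii
      obtain s where s: "s > t" "root_ords D ws \<inter> {t<..} = {s}" "Lc D ws s = 1"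
        "t \<notin> root_ords D ws \<longrightarrow> Lc D ws t = 1" using gt1[OF D] iii unfolding t_def by blast
      have topA: "\<forall>x\<in>root_ords D zs. x \<le> t" using iii gt0[OF D] unfolding t_def by blast
      have tA: "t \<in> root_ords D zs" using iii SA_lv[OF D] unfolding t_def by blast
      have K2s: "\<forall>x. (x \<in> root_ords D ws \<or> x \<in> root_ords D zs) \<and> x \<le> t \<longrightarrow> degree F * Lc D ws x = degree G * Lc D zs x"
      proof (intro allI impI)
        fix x assume "(x \<in> root_ords D ws \<or> x \<in> root_ords D zs) \<and> x \<le> t"
        then have "degree G * Lc D zs x = degree F * Lc D ws x" using K2 by blast
        then show "degree F * Lc D ws x = degree G * Lc D zs x" by simp
      qed
      have K3s: "\<forall>x\<in>root_ords D ws. x < t \<longrightarrow> related (Pc G D ws x) (Pc F D zs x)"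
        using K1b K3 related_sym by blast
      have par0s: "ereal (real (degree F)) * O0 G = ereal (real (degree G)) * O0 F" using par0 by simp
      note asm = assemble_less[OF K1b K1a K2s K3s topA tA s par0s]
      have rel: "\<forall>i. 1 \<le> i \<and> i < min (iota D zs) (iota D ws) \<longrightarrow> related (Ppoly F D zs i) (Ppoly G D ws i)"
      proof (intro allI impI)
        fix i assume "1 \<le> i \<and> i < min (iota D zs) (iota D ws)"
        then have "related (Ppoly G D ws i) (Ppoly F D zs i)" using asm(2) by (simp add: min.commute)
        then show "related (Ppoly F D zs i) (Ppoly G D ws i)" by (rule related_sym)
      qed
      show ?thesis using asm(1,3) rel unfolding unp_rel_def by auto
    qed
  qed
qed

theorem mainTheorem20:
  fixes F G :: "'k::field_char_0 fls poly"
    and nu mu :: nat and zs ws :: "'k fls list"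
  assumes alg_closed: "\<forall>p :: 'k poly. degree p > 0 \<longrightarrow> (\<exists>x. poly p x = 0)"
    and degF: "degree F > 0" and degG: "degree G > 0"
    and jac: "degree (jac F G) = 0"
    and rootsF: "root_factorization F nu zs"
    and rootsG: "root_factorization G mu ws"
    and par0: "ereal (real (degree G)) * O0 F = ereal (real (degree F)) * O0 G"
    and int_neg: "intY F < 0 \<or> intY G < 0"
  shows "unp_rel F nu zs G mu ws
     \<and> (\<forall>i. 1 \<le> i \<and> i < min (iota nu zs) (iota mu ws) \<longrightarrow>
            related (Ppoly F nu zs i) (Ppoly G mu ws i))
     \<and> (Ohat nu zs = Ohat mu ws \<longrightarrow>
          unp_par F nu zs G mu ws
          \<and> ereal (real (degree G)) * intY F = ereal (real (degree F)) * intY G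
          \<and> degree G * Lhat nu zs = degree F * Lhat mu ws)"
proof -
  have nu: "nu > 0" using rootsF unfolding root_factorization_def by simp
  have mu: "mu > 0" using rootsG unfolding root_factorization_def by simp
  define D where "D = nu * mu"
  have D: "D > 0" unfolding D_def using nu mu by simp
  define zs' where "zs' = map (cp mu) zs"
  define ws' where "ws' = map (cp nu) ws"
  have rF: "map_poly (cp D) F = smult (cp D (lead_coeff F)) (\<Prod>z\<leftarrow>zs'. [:-z, 1:])"
    unfolding D_def zs'_def by (rule rootfact_common[OF rootsF mu])
  have rG: "map_poly (cp D) G = smult (cp D (lead_coeff G)) (\<Prod>z\<leftarrow>ws'. [:-z, 1:])"
    unfolding D_def ws'_def using rootfact_common[OF rootsG nu] by (simp add: mult.commute)
  have X: "unp_rel F D zs' G D ws'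
     \<and> (\<forall>i. 1 \<le> i \<and> i < min (iota D zs') (iota D ws') \<longrightarrow>
            related (Ppoly F D zs' i) (Ppoly G D ws' i))
     \<and> (Ohat D zs' = Ohat D ws' \<longrightarrow>
          unp_par F D zs' G D ws'
          \<and> ereal (real (degree G)) * intY F = ereal (real (degree F)) * intY G
          \<and> degree G * Lhat D zs' = degree F * Lhat D ws')"
    by (rule main_common[OF alg_closed degF degG jac D rF rG par0 int_neg])
  have fr1: "\<And>z. rord D (cp mu z) = rord nu z" unfolding D_def using rord_cp[OF nu mu] .
  have fi1: "\<And>z. inco (cp mu z) = inco z" using cp_inco[OF mu] .
  have fr2: "\<And>z. rord D (cp nu z) = rord mu z" unfolding D_def using rord_cp[OF mu nu] by (simp add: mult.commute)
  have fi2: "\<And>z. inco (cp nu z) = inco z" using cp_inco[OF nu] .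
  note eqs = iota_f[OF fr1 fi1, of zs] Ord_f[OF fr1 fi1, of zs] Ohat_f[OF fr1 fi1, of zs]
    Li_f[OF fr1 fi1, of zs] Lhat_f[OF fr1 fi1, of zs] Ppoly_f[OF fr1 fi1, of _ zs]
    iota_f[OF fr2 fi2, of ws] Ord_f[OF fr2 fi2, of ws] Ohat_f[OF fr2 fi2, of ws]
    Li_f[OF fr2 fi2, of ws] Lhat_f[OF fr2 fi2, of ws] Ppoly_f[OF fr2 fi2, of _ ws]
  show ?thesis using X unfolding zs'_def ws'_def unp_rel_def unp_par_def unp_less_def unp_par_j_def eqs .
qed

end
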